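(* In a generalised differential Seely category, for every $X\in\mathscr C$ and $A\in\mathcal L$, the chain rule holds in the fibre over $X$: $\partial^X_A;\mathbf p^X_A=(\mathbf c^X_A\otimes_X\mathrm{id}_{(X,A)});(\mathbf p^X_A\otimes_X\partial^X_A);\partial^X_{!A}$.
   Context: Composition is diagrammatic; monoidal categories are strict. Setting: an LNL adjunction $\mathcal F\dashv\mathcal U$, $\mathcal F:\mathscr C\to\mathcal L$, between cartesian $(\mathscr C,\times,I)$ and symmetric monoidal $(\mathcal L,\otimes,1)$ (symmetry $\sigma$); $\mathcal U$ lax monoidal via $n_{A,B}$; $\mathcal F$ strong monoidal via isomorphisms $m_{X,Y}:\mathcal F(X)\otimes\mathcal F(Y)\to\mathcal F(X\times Y)$, $m_1$; unit $\eta$, comonad $!=\mathcal F\mathcal U$ with comultiplication $\mathbf p$; $\mathbf c_X:=\mathcal F(\Delta_X);m_{X,X}^{-1}$, $\mathbf w_X:=\mathcal F(t_X);m_1^{-1}$; $\mathbf c_A:=\mathbf c_{\mathcal U(A)}$, $\mathbf w_A:=\mathbf w_{\mathcal U(A)}$. $LS(\mathscr C)$: objects $(X,A)$; morphisms $(f,u):(X,A)\to(Y,B)$ with $f:X\to Y$, $u:\mathcal F(X)\otimes A\to B$; composition $(f,u);(g,v)=(f;g,(\mathbf c_X\otimes\mathrm{id}_A);(\mathcal F(f)\otimes u);v)$; identity $(\mathrm{id}_X,\mathbf w_X\otimes\mathrm{id}_A)$; $\mathbf{ls}(f,u)=f$; fibre $LS(\mathscr C)_X$ = morphisms $(\mathrm{id}_X,u)$,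 with $(X,A)\otimes_X(X,B)=(X,A\otimes B)$ and $(\mathrm{id}_X,u)\otimes_X(\mathrm{id}_X,v)=(\mathrm{id}_X,(\mathbf c_X\otimes\mathrm{id});(\mathrm{id}\otimes\sigma_{\mathcal F(X),A}\otimes\mathrm{id});(u\otimes v))$. With biproducts $\oplus$ in $\mathcal L$: fibrewise injections $\iota^X_i=(\mathrm{id}_X,\mathbf w_X\otimes\iota_i)$; products in $LS(\mathscr C)$: $(X\times Y,A\oplus B)$, projections $(\pi_i,\mathbf w_{X\times Y}\otimes\pi_i)$. GDSC: $\mathcal L$ additive (CMon-enriched, $\otimes$ bilinear) with finite products, and $\mathcal T:\mathscr C\to LS(\mathscr C)$ with: (t.1) $\mathbf{ls}\circ\mathcal T=\mathrm{id}$, $\mathcal T(X)=(X,\lambda(X))$, and $\varphi_{X,Y}:=\langle\mathcal T(\pi_1),\mathcal T(\pi_2)\rangle:\mathcal T(X\times Y)\to(X\times Y,\lambda(X)\oplus\lambda(Y))$ iso; (t.2) $\mathcal T(\mathcal U(A))=(\mathcal U(A),A)$; (t.3) with $i^{X,Y}_2:=\iota^{X\times Y}_2;\varphi^{-1}_{X,Y}$, $⦃(f,u)⦄:=\langle\pi_1;f,(\eta_X\times\mathrm{id});n_{\mathcal F(X),A};\mathcal U(u)\rangle$, $W(f,u):=(⦃(f,u)⦄,(\mathcal F(\pi_1)\otimes\mathrm{id}_A);u)$: $W(f,u);i^{Y,\mathcal U(B)}_2=i^{X,\mathcal U(A)}_2;\mathcal T(⦃(f,u)⦄)$. Differential: for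 $h:X\to Y$ with $\mathcal T(h)=(h,v)$, $\mathrm D(h):=(\mathrm{id}_X,v)$; for $h:X\times Y\to Z$, $\mathrm D_2(h):=i^{X,Y}_2;\mathrm D(h)$. $\mathscr D^X_A:=\mathrm D_2(\pi_2;\eta_{\mathcal U(A)}):(X\times\mathcal U(A),A)\to(X\times\mathcal U(A),!A)$. $\Sigma_{(X,A)}:LS(\mathscr C)_{X\times\mathcal U(A)}\to LS(\mathscr C)_X$: $(X\times\mathcal U(A),B)\mapsto(X,!A\otimes B)$, $(\mathrm{id},u)\mapsto(\mathrm{id}_X,(\mathrm{id}_{\mathcal F(X)}\otimes\mathbf c_A\otimes\mathrm{id}_B);(\sigma_{\mathcal F(X),!A}\otimes\mathrm{id}_{!A\otimes B});(\mathrm{id}_{!A}\otimes((m_{X,\mathcal U(A)}\otimes\mathrm{id}_B);u)))$. $\mu^{(X,A)}_{(X,B)}:=(\mathrm{id}_X,\mathbf w_X\otimes\mathbf w_A\otimes\mathrm{id}_B)$. Deriving transform: $\partial^X_A:=\Sigma_{(X,A)}(\mathscr D^X_A);\mu^{(X,A)}_{(X,!A)}:(X,!A\otimes A)\to(X,!A)$. Fibrewise structure: $\mathbf p^X_A:=(\mathrm{id}_X,\mathbf w_X\otimes\mathbf p_A):(X,!A)\to(X,!!A)$, $\mathbf c^X_A:=(\mathrm{id}_X,\mathbf w_X\otimes\mathbf c_A):(X,!A)\to(X,!A\otimes!A)$. *)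

theory Defs
  imports Main
begin

(* Categories: objects = all elements of a type, morphisms = elements of a
   type with explicit hom-sets; composition is DIAGRAMMATIC: cmp f g = f;g.
   'c / 'f : objects / morphisms of the cartesian category C
   'l / 'g : objects / morphisms of the symmetric monoidal category L
   =================================================================== *)

record ('c,'f,'l,'g) gdsc_data =
  cHom  :: "'c \<Rightarrow> 'c \<Rightarrow> 'f set"
  cId   :: "'c \<Rightarrow> 'f"
  cCmp  :: "'f \<Rightarrow> 'f \<Rightarrow> 'f"
  cPrd  :: "'c \<Rightarrow> 'c \<Rightarrow> 'c"
  cPr1  :: "'c \<Rightarrow> 'c \<Rightarrow> 'f"
  cPr2  :: "'c \<Rightarrow> 'c \<Rightarrow> 'f"
  cTup  :: "'f \<Rightarrow> 'f \<Rightarrow> 'f"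
  cTrm  :: "'c"
  cBang :: "'c \<Rightarrow> 'f"
  lHom  :: "'l \<Rightarrow> 'l \<Rightarrow> 'g set"
  lId   :: "'l \<Rightarrow> 'g"
  lCmp  :: "'g \<Rightarrow> 'g \<Rightarrow> 'g"
  lTen  :: "'l \<Rightarrow> 'l \<Rightarrow> 'l"
  lTenM :: "'g \<Rightarrow> 'g \<Rightarrow> 'g"
  lUnit :: "'l"
  lSym  :: "'l \<Rightarrow> 'l \<Rightarrow> 'g"
  lZero :: "'l \<Rightarrow> 'l \<Rightarrow> 'g"
  lPlus :: "'g \<Rightarrow> 'g \<Rightarrow> 'g"
  lBip  :: "'l \<Rightarrow> 'l \<Rightarrow> 'l"
  lBp1  :: "'l \<Rightarrow> 'l \<Rightarrow> 'g"
  lBp2  :: "'l \<Rightarrow> 'l \<Rightarrow> 'g"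
  lTup  :: "'g \<Rightarrow> 'g \<Rightarrow> 'g"
  lTrm  :: "'l"
  lBang :: "'l \<Rightarrow> 'g"
  FO    :: "'c \<Rightarrow> 'l"
  FM    :: "'f \<Rightarrow> 'g"
  UO    :: "'l \<Rightarrow> 'c"
  UM    :: "'g \<Rightarrow> 'f"
  adjEta :: "'c \<Rightarrow> 'f"
  adjEps :: "'l \<Rightarrow> 'g"
  mF    :: "'c \<Rightarrow> 'c \<Rightarrow> 'g"
  mFi   :: "'c \<Rightarrow> 'c \<Rightarrow> 'g"
  mF1   :: "'g"
  mF1i  :: "'g"
  nU    :: "'l \<Rightarrow> 'l \<Rightarrow> 'f"
  nU1   :: "'f"
  lam   :: "'c \<Rightarrow> 'l"
  TM    :: "'f \<Rightarrow> 'g"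

definition is_category :: "('o \<Rightarrow> 'o \<Rightarrow> 'm set) \<Rightarrow> ('o \<Rightarrow> 'm) \<Rightarrow> ('m \<Rightarrow> 'm \<Rightarrow> 'm) \<Rightarrow> bool" where
  "is_category hom idm cmp \<longleftrightarrow>
     (\<forall>X. idm X \<in> hom X X) \<and>
     (\<forall>X Y Z f g. f \<in> hom X Y \<longrightarrow> g \<in> hom Y Z \<longrightarrow> cmp f g \<in> hom X Z) \<and>
     (\<forall>X Y f. f \<in> hom X Y \<longrightarrow> cmp (idm X) f = f \<and> cmp f (idm Y) = f) \<and>
     (\<forall>W X Y Z f g h. f \<in> hom W X \<longrightarrow> g \<in> hom X Y \<longrightarrow> h \<in> hom Y Z \<longrightarrow>
        cmp (cmp f g) h = cmp f (cmp g h))"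

definition is_functor ::
  "('o \<Rightarrow> 'o \<Rightarrow> 'm set) \<Rightarrow> ('o \<Rightarrow> 'm) \<Rightarrow> ('m \<Rightarrow> 'm \<Rightarrow> 'm) \<Rightarrow>
   ('p \<Rightarrow> 'p \<Rightarrow> 'n set) \<Rightarrow> ('p \<Rightarrow> 'n) \<Rightarrow> ('n \<Rightarrow> 'n \<Rightarrow> 'n) \<Rightarrow>
   ('o \<Rightarrow> 'p) \<Rightarrow> ('m \<Rightarrow> 'n) \<Rightarrow> bool" where
  "is_functor hom idm cmp hom' idm' cmp' Fo Fm \<longleftrightarrow>
     (\<forall>X Y f. f \<in> hom X Y \<longrightarrow> Fm f \<in> hom' (Fo X) (Fo Y)) \<and>
     (\<forall>X. Fm (idm X) = idm' (Fo X)) \<and>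
     (\<forall>X Y Z f g. f \<in> hom X Y \<longrightarrow> g \<in> hom Y Z \<longrightarrow> Fm (cmp f g) = cmp' (Fm f) (Fm g))"

definition prodC where
  "prodC S X Y f g = cTup S (cCmp S (cPr1 S X Y) f) (cCmp S (cPr2 S X Y) g)"

definition assocC where
  "assocC S X Y Z =
     cTup S (cCmp S (cPr1 S (cPrd S X Y) Z) (cPr1 S X Y))
            (cTup S (cCmp S (cPr1 S (cPrd S X Y) Z) (cPr2 S X Y)) (cPr2 S (cPrd S X Y) Z))"

definition swapC where "swapC S X Y = cTup S (cPr2 S X Y) (cPr1 S X Y)"

definition diagC where "diagC S X = cTup S (cId S X) (cId S X)"

definition contr where "contr S X = lCmp S (FM S (diagC S X)) (mFi S X X)"
definition weak where "weak S X = lCmp S (FM S (cBang S X)) (mF1i S)"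

(* the exponential !A = F(U(A)) and its comultiplication p_A = F(eta_{U A}) *)
definition bangL where "bangL S A = FO S (UO S A)"
definition digL where "digL S A = FM S (adjEta S (UO S A))"

definition inj1 where "inj1 S A B = lTup S (lId S A) (lZero S A B)"
definition inj2 where "inj2 S A B = lTup S (lZero S B A) (lId S B)"

definition LShom where
  "LShom S P Q = {(f,u). f \<in> cHom S (fst P) (fst Q) \<and> u \<in> lHom S (lTen S (FO S (fst P)) (snd P)) (snd Q)}"

definition LScmp where
  "LScmp S P h k =
     (cCmp S (fst h) (fst k),
      lCmp S (lCmp S (lTenM S (contr S (fst P)) (lId S (snd P))) (lTenM S (FM S (fst h)) (snd h))) (snd k))"

definition LSid where "LSid S P = (cId S (fst P), lTenM S (weak S (fst P)) (lId S (snd P)))"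

definition LSiso where
  "LSiso S P Q h \<longleftrightarrow> h \<in> LShom S P Q \<and>
     (\<exists>k \<in> LShom S Q P. LScmp S P h k = LSid S P \<and> LScmp S Q k h = LSid S Q)"

definition LSinv where
  "LSinv S P Q h = (SOME k. k \<in> LShom S Q P \<and> LScmp S P h k = LSid S P \<and> LScmp S Q k h = LSid S Q)"

(* pairing into the product (X x Y, A (+) B) of LS(C), whose projections are (pi_i, w (x) pi_i) *)
definition LStup where "LStup S h k = (cTup S (fst h) (fst k), lTup S (snd h) (snd k))"

definition Tf where "Tf S h = (h, TM S h)"

definition phi where
  "phi S X Y = LStup S (Tf S (cPr1 S X Y)) (Tf S (cPr2 S X Y))"

definition iota2 where "iota2 S X A B = (cId S X, lTenM S (weak S X) (inj2 S A B))"

definition i2 where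
  "i2 S X Y =
     LScmp S (cPrd S X Y, lam S Y) (iota2 S (cPrd S X Y) (lam S X) (lam S Y))
       (LSinv S (cPrd S X Y, lam S (cPrd S X Y)) (cPrd S X Y, lBip S (lam S X) (lam S Y)) (phi S X Y))"

definition brace where
  "brace S X A f u =
     cTup S (cCmp S (cPr1 S X (UO S A)) f)
            (cCmp S (cCmp S (prodC S X (UO S A) (adjEta S X) (cId S (UO S A))) (nU S (FO S X) A)) (UM S u))"

definition Wmap where
  "Wmap S X A f u = (brace S X A f u, lCmp S (lTenM S (FM S (cPr1 S X (UO S A))) (lId S A)) u)"

definition Dm where "Dm S X h = (cId S X, TM S h)"

definition D2 where "D2 S X Y h = LScmp S (cPrd S X Y, lam S Y) (i2 S X Y) (Dm S (cPrd S X Y) h)"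

definition scrD where
  "scrD S X A = D2 S X (UO S A) (cCmp S (cPr2 S X (UO S A)) (adjEta S (UO S A)))"

definition SigmaX where
  "SigmaX S X A B h =
     (cId S X,
      lCmp S (lCmp S (lTenM S (lTenM S (lId S (FO S X)) (contr S (UO S A))) (lId S B))
                     (lTenM S (lSym S (FO S X) (bangL S A)) (lId S (lTen S (bangL S A) B))))
             (lTenM S (lId S (bangL S A)) (lCmp S (lTenM S (mF S X (UO S A)) (lId S B)) (snd h))))"

definition muX where
  "muX S X A B = (cId S X, lTenM S (lTenM S (weak S X) (weak S (UO S A))) (lId S B))"

definition derX where
  "derX S X A = LScmp S (X, lTen S (bangL S A) A) (SigmaX S X A A (scrD S X A)) (muX S X A (bangL S A))"

definition digX where "digX S X A = (cId S X, lTenM S (weak S X) (digL S A))"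
definition contrX where "contrX S X A = (cId S X, lTenM S (weak S X) (contr S (UO S A)))"

definition tenX where
  "tenX S X A B h k =
     (cId S X,
      lCmp S (lCmp S (lTenM S (contr S X) (lId S (lTen S A B)))
                     (lTenM S (lTenM S (lId S (FO S X)) (lSym S (FO S X) A)) (lId S B)))
             (lTenM S (snd h) (snd k)))"

definition cartesian_ax where
  "cartesian_ax S \<longleftrightarrow>
     is_category (cHom S) (cId S) (cCmp S) \<and>
     (\<forall>X Y. cPr1 S X Y \<in> cHom S (cPrd S X Y) X \<and> cPr2 S X Y \<in> cHom S (cPrd S X Y) Y) \<and>
     (\<forall>X Y Z f g. f \<in> cHom S Z X \<longrightarrow> g \<in> cHom S Z Y \<longrightarrow>
        cTup S f g \<in> cHom S Z (cPrd S X Y) \<and>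
        cCmp S (cTup S f g) (cPr1 S X Y) = f \<and> cCmp S (cTup S f g) (cPr2 S X Y) = g) \<and>
     (\<forall>X Y Z h. h \<in> cHom S Z (cPrd S X Y) \<longrightarrow>
        cTup S (cCmp S h (cPr1 S X Y)) (cCmp S h (cPr2 S X Y)) = h) \<and>
     (\<forall>X. cBang S X \<in> cHom S X (cTrm S)) \<and>
     (\<forall>X f. f \<in> cHom S X (cTrm S) \<longrightarrow> f = cBang S X)"

definition strict_smc_ax where
  "strict_smc_ax S \<longleftrightarrow>
     is_category (lHom S) (lId S) (lCmp S) \<and>
     (\<forall>A B C. lTen S (lTen S A B) C = lTen S A (lTen S B C)) \<and>
     (\<forall>A. lTen S (lUnit S) A = A \<and> lTen S A (lUnit S) = A) \<and>
     (\<forall>A B C D f g. f \<in> lHom S A B \<longrightarrow> g \<in> lHom S C D \<longrightarrow> lTenM S f g \<in> lHom S (lTen S A C) (lTen S B D)) \<and>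
     (\<forall>A B. lTenM S (lId S A) (lId S B) = lId S (lTen S A B)) \<and>
     (\<forall>A B C D E G f f' g g'. f \<in> lHom S A B \<longrightarrow> f' \<in> lHom S B C \<longrightarrow> g \<in> lHom S D E \<longrightarrow> g' \<in> lHom S E G \<longrightarrow>
        lTenM S (lCmp S f f') (lCmp S g g') = lCmp S (lTenM S f g) (lTenM S f' g')) \<and>
     (\<forall>A A' B B' C C' f g h. f \<in> lHom S A A' \<longrightarrow> g \<in> lHom S B B' \<longrightarrow> h \<in> lHom S C C' \<longrightarrow>
        lTenM S (lTenM S f g) h = lTenM S f (lTenM S g h)) \<and>
     (\<forall>A B f. f \<in> lHom S A B \<longrightarrow> lTenM S (lId S (lUnit S)) f = f \<and> lTenM S f (lId S (lUnit S)) = f) \<and>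
     (\<forall>A B. lSym S A B \<in> lHom S (lTen S A B) (lTen S B A)) \<and>
     (\<forall>A A' B B' f g. f \<in> lHom S A A' \<longrightarrow> g \<in> lHom S B B' \<longrightarrow>
        lCmp S (lTenM S f g) (lSym S A' B') = lCmp S (lSym S A B) (lTenM S g f)) \<and>
     (\<forall>A B. lCmp S (lSym S A B) (lSym S B A) = lId S (lTen S A B)) \<and>
     (\<forall>A. lSym S A (lUnit S) = lId S A) \<and>
     (\<forall>A B C. lSym S A (lTen S B C) = lCmp S (lTenM S (lSym S A B) (lId S C)) (lTenM S (lId S B) (lSym S A C))) \<and>
     (\<forall>A B C. lSym S (lTen S A B) C = lCmp S (lTenM S (lId S A) (lSym S B C)) (lTenM S (lSym S A C) (lId S B)))"

definition additive_ax where
  "additive_ax S \<longleftrightarrow>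
     (\<forall>A B. lZero S A B \<in> lHom S A B) \<and>
     (\<forall>A B f g. f \<in> lHom S A B \<longrightarrow> g \<in> lHom S A B \<longrightarrow> lPlus S f g \<in> lHom S A B \<and> lPlus S f g = lPlus S g f) \<and>
     (\<forall>A B f g h. f \<in> lHom S A B \<longrightarrow> g \<in> lHom S A B \<longrightarrow> h \<in> lHom S A B \<longrightarrow>
        lPlus S (lPlus S f g) h = lPlus S f (lPlus S g h)) \<and>
     (\<forall>A B f. f \<in> lHom S A B \<longrightarrow> lPlus S f (lZero S A B) = f) \<and>
     (\<forall>A B C f g h. f \<in> lHom S A B \<longrightarrow> g \<in> lHom S B C \<longrightarrow> h \<in> lHom S B C \<longrightarrow>
        lCmp S f (lPlus S g h) = lPlus S (lCmp S f g) (lCmp S f h)) \<and>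
     (\<forall>A B C f g h. g \<in> lHom S A B \<longrightarrow> h \<in> lHom S A B \<longrightarrow> f \<in> lHom S B C \<longrightarrow>
        lCmp S (lPlus S g h) f = lPlus S (lCmp S g f) (lCmp S h f)) \<and>
     (\<forall>A B C f. f \<in> lHom S A B \<longrightarrow> lCmp S f (lZero S B C) = lZero S A C) \<and>
     (\<forall>A B C f. f \<in> lHom S B C \<longrightarrow> lCmp S (lZero S A B) f = lZero S A C) \<and>
     (\<forall>A B C D f g h. f \<in> lHom S A B \<longrightarrow> g \<in> lHom S C D \<longrightarrow> h \<in> lHom S C D \<longrightarrow>
        lTenM S f (lPlus S g h) = lPlus S (lTenM S f g) (lTenM S f h)) \<and>
     (\<forall>A B C D f g h. g \<in> lHom S A B \<longrightarrow> h \<in> lHom S A B \<longrightarrow> f \<in> lHom S C D \<longrightarrow>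
        lTenM S (lPlus S g h) f = lPlus S (lTenM S g f) (lTenM S h f)) \<and>
     (\<forall>A B C D f. f \<in> lHom S A B \<longrightarrow> lTenM S f (lZero S C D) = lZero S (lTen S A C) (lTen S B D)) \<and>
     (\<forall>A B C D f. f \<in> lHom S C D \<longrightarrow> lTenM S (lZero S A B) f = lZero S (lTen S A C) (lTen S B D))"

definition products_L_ax where
  "products_L_ax S \<longleftrightarrow>
     (\<forall>A B. lBp1 S A B \<in> lHom S (lBip S A B) A \<and> lBp2 S A B \<in> lHom S (lBip S A B) B) \<and>
     (\<forall>A B C f g. f \<in> lHom S C A \<longrightarrow> g \<in> lHom S C B \<longrightarrow>
        lTup S f g \<in> lHom S C (lBip S A B) \<and>
        lCmp S (lTup S f g) (lBp1 S A B) = f \<and> lCmp S (lTup S f g) (lBp2 S A B) = g) \<and>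
     (\<forall>A B C h. h \<in> lHom S C (lBip S A B) \<longrightarrow>
        lTup S (lCmp S h (lBp1 S A B)) (lCmp S h (lBp2 S A B)) = h) \<and>
     (\<forall>A. lBang S A \<in> lHom S A (lTrm S)) \<and>
     (\<forall>A f. f \<in> lHom S A (lTrm S) \<longrightarrow> f = lBang S A)"

definition adjunction_ax where
  "adjunction_ax S \<longleftrightarrow>
     is_functor (cHom S) (cId S) (cCmp S) (lHom S) (lId S) (lCmp S) (FO S) (FM S) \<and>
     is_functor (lHom S) (lId S) (lCmp S) (cHom S) (cId S) (cCmp S) (UO S) (UM S) \<and>
     (\<forall>X. adjEta S X \<in> cHom S X (UO S (FO S X))) \<and>
     (\<forall>A. adjEps S A \<in> lHom S (FO S (UO S A)) A) \<and>
     (\<forall>X Y f. f \<in> cHom S X Y \<longrightarrow> cCmp S f (adjEta S Y) = cCmp S (adjEta S X) (UM S (FM S f))) \<and>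
     (\<forall>A B u. u \<in> lHom S A B \<longrightarrow> lCmp S (FM S (UM S u)) (adjEps S B) = lCmp S (adjEps S A) u) \<and>
     (\<forall>X. lCmp S (FM S (adjEta S X)) (adjEps S (FO S X)) = lId S (FO S X)) \<and>
     (\<forall>A. cCmp S (adjEta S (UO S A)) (UM S (adjEps S A)) = cId S (UO S A))"

definition F_strong_ax where
  "F_strong_ax S \<longleftrightarrow>
     (\<forall>X Y. mF S X Y \<in> lHom S (lTen S (FO S X) (FO S Y)) (FO S (cPrd S X Y)) \<and>
            mFi S X Y \<in> lHom S (FO S (cPrd S X Y)) (lTen S (FO S X) (FO S Y)) \<and>
            lCmp S (mF S X Y) (mFi S X Y) = lId S (lTen S (FO S X) (FO S Y)) \<and>
            lCmp S (mFi S X Y) (mF S X Y) = lId S (FO S (cPrd S X Y))) \<and>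
     mF1 S \<in> lHom S (lUnit S) (FO S (cTrm S)) \<and> mF1i S \<in> lHom S (FO S (cTrm S)) (lUnit S) \<and>
     lCmp S (mF1 S) (mF1i S) = lId S (lUnit S) \<and> lCmp S (mF1i S) (mF1 S) = lId S (FO S (cTrm S)) \<and>
     (\<forall>X X' Y Y' f g. f \<in> cHom S X X' \<longrightarrow> g \<in> cHom S Y Y' \<longrightarrow>
        lCmp S (lTenM S (FM S f) (FM S g)) (mF S X' Y') = lCmp S (mF S X Y) (FM S (prodC S X Y f g))) \<and>
     (\<forall>X Y Z. lCmp S (lCmp S (lTenM S (mF S X Y) (lId S (FO S Z))) (mF S (cPrd S X Y) Z)) (FM S (assocC S X Y Z))
               = lCmp S (lTenM S (lId S (FO S X)) (mF S Y Z)) (mF S X (cPrd S Y Z))) \<and>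
     (\<forall>X. lCmp S (lCmp S (lTenM S (mF1 S) (lId S (FO S X))) (mF S (cTrm S) X)) (FM S (cPr2 S (cTrm S) X))
            = lId S (FO S X)) \<and>
     (\<forall>X. lCmp S (lCmp S (lTenM S (lId S (FO S X)) (mF1 S)) (mF S X (cTrm S))) (FM S (cPr1 S X (cTrm S)))
            = lId S (FO S X)) \<and>
     (\<forall>X Y. lCmp S (lSym S (FO S X) (FO S Y)) (mF S Y X) = lCmp S (mF S X Y) (FM S (swapC S X Y)))"

definition U_lax_ax where
  "U_lax_ax S \<longleftrightarrow>
     (\<forall>A B. nU S A B \<in> cHom S (cPrd S (UO S A) (UO S B)) (UO S (lTen S A B))) \<and>
     nU1 S \<in> cHom S (cTrm S) (UO S (lUnit S)) \<and>
     (\<forall>A A' B B' u v. u \<in> lHom S A A' \<longrightarrow> v \<in> lHom S B B' \<longrightarrow>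
        cCmp S (prodC S (UO S A) (UO S B) (UM S u) (UM S v)) (nU S A' B') = cCmp S (nU S A B) (UM S (lTenM S u v))) \<and>
     (\<forall>A B C. cCmp S (prodC S (cPrd S (UO S A) (UO S B)) (UO S C) (nU S A B) (cId S (UO S C))) (nU S (lTen S A B) C)
        = cCmp S (assocC S (UO S A) (UO S B) (UO S C))
            (cCmp S (prodC S (UO S A) (cPrd S (UO S B) (UO S C)) (cId S (UO S A)) (nU S B C)) (nU S A (lTen S B C)))) \<and>
     (\<forall>A. cCmp S (prodC S (cTrm S) (UO S A) (nU1 S) (cId S (UO S A))) (nU S (lUnit S) A) = cPr2 S (cTrm S) (UO S A)) \<and>
     (\<forall>A. cCmp S (prodC S (UO S A) (cTrm S) (cId S (UO S A)) (nU1 S)) (nU S A (lUnit S)) = cPr1 S (UO S A) (cTrm S)) \<and>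
     (\<forall>A B. cCmp S (swapC S (UO S A) (UO S B)) (nU S B A) = cCmp S (nU S A B) (UM S (lSym S A B)))"

definition monoidal_adj_ax where
  "monoidal_adj_ax S \<longleftrightarrow>
     (\<forall>X Y. cCmp S (prodC S X Y (adjEta S X) (adjEta S Y)) (cCmp S (nU S (FO S X) (FO S Y)) (UM S (mF S X Y)))
              = adjEta S (cPrd S X Y)) \<and>
     cCmp S (nU1 S) (UM S (mF1 S)) = adjEta S (cTrm S) \<and>
     (\<forall>A B. lCmp S (lCmp S (mF S (UO S A) (UO S B)) (FM S (nU S A B))) (adjEps S (lTen S A B))
              = lTenM S (adjEps S A) (adjEps S B)) \<and>
     lCmp S (lCmp S (mF1 S) (FM S (nU1 S))) (adjEps S (lUnit S)) = lId S (lUnit S)"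

definition LNL_ax where
  "LNL_ax S \<longleftrightarrow> cartesian_ax S \<and> strict_smc_ax S \<and> adjunction_ax S \<and>
                  F_strong_ax S \<and> U_lax_ax S \<and> monoidal_adj_ax S"

definition T_functor_ax where
  "T_functor_ax S \<longleftrightarrow>
     (\<forall>X Y h. h \<in> cHom S X Y \<longrightarrow> Tf S h \<in> LShom S (X, lam S X) (Y, lam S Y)) \<and>
     (\<forall>X. Tf S (cId S X) = LSid S (X, lam S X)) \<and>
     (\<forall>X Y Z f g. f \<in> cHom S X Y \<longrightarrow> g \<in> cHom S Y Z \<longrightarrow>
        Tf S (cCmp S f g) = LScmp S (X, lam S X) (Tf S f) (Tf S g))"

definition t1_ax where
  "t1_ax S \<longleftrightarrow> (\<forall>X Y. LSiso S (cPrd S X Y, lam S (cPrd S X Y)) (cPrd S X Y, lBip S (lam S X) (lam S Y)) (phi S X Y))"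

definition t2_ax where "t2_ax S \<longleftrightarrow> (\<forall>A. lam S (UO S A) = A)"

definition t3_ax where
  "t3_ax S \<longleftrightarrow>
     (\<forall>X A Y B f u. (f, u) \<in> LShom S (X, A) (Y, B) \<longrightarrow>
        LScmp S (cPrd S X (UO S A), A) (Wmap S X A f u) (i2 S Y (UO S B))
        = LScmp S (cPrd S X (UO S A), A) (i2 S X (UO S A)) (Tf S (brace S X A f u)))"

definition GDSC where
  "GDSC S \<longleftrightarrow> LNL_ax S \<and> additive_ax S \<and> products_L_ax S \<and>
               T_functor_ax S \<and> t1_ax S \<and> t2_ax S \<and> t3_ax S"

end

theory Submission imports Defs begin

locale gd =
  fixes S :: "('c,'f,'l,'g) gdsc_data"
  assumes G: "GDSC S"
begin

abbreviation "LH \<equiv> lHom S"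
abbreviation "lc \<equiv> lCmp S"
abbreviation "lt \<equiv> lTenM S"
abbreviation "lT \<equiv> lTen S"
abbreviation "lid \<equiv> lId S"
abbreviation "CH \<equiv> cHom S"
abbreviation "cc \<equiv> cCmp S"
abbreviation "cid \<equiv> cId S"
abbreviation "Fo \<equiv> FO S"
abbreviation "Fm \<equiv> FM S"
abbreviation "Uo \<equiv> UO S"
abbreviation "Um \<equiv> UM S"
abbreviation "w \<equiv> weak S"
abbreviation "cX \<equiv> contr S"
abbreviation "Iu \<equiv> lUnit S"
abbreviation "p1 \<equiv> cPr1 S"
abbreviation "p2 \<equiv> cPr2 S"
abbreviation "Pr \<equiv> cPrd S"
abbreviation "eta \<equiv> adjEta S"

lemma ax: "cartesian_ax S" "strict_smc_ax S" "additive_ax S" "products_L_ax S"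
  "adjunction_ax S" "F_strong_ax S" "U_lax_ax S" "monoidal_adj_ax S"
  "T_functor_ax S" "t1_ax S" "t2_ax S" "t3_ax S"
  using G unfolding GDSC_def LNL_ax_def by auto

lemma ten_assoc_obj[simp]: "lT (lT A B) C = lT A (lT B C)"
  and ten_unit_l[simp]: "lT Iu A = A" and ten_unit_r[simp]: "lT A Iu = A"
  using ax(2) unfolding strict_smc_ax_def by auto

lemma lam_U[simp]: "lam S (Uo A) = A" using ax(11) unfolding t2_ax_def by auto


lemma c_cat: "is_category (cHom S) (cId S) (cCmp S)" using ax(1) unfolding cartesian_ax_def by auto

lemma c_id_ty: "X = A \<Longrightarrow> X = B \<Longrightarrow> cid X \<in> CH A B"
  using c_cat unfolding is_category_def by auto
lemma c_cmp_ty: "f \<in> CH X Y \<Longrightarrow> g \<in> CH Y' Z \<Longrightarrow> Y = Y' \<Longrightarrow> X = X' \<Longrightarrow> Z = Z' \<Longrightarrow> cc f g \<in> CH X' Z'"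
  using c_cat unfolding is_category_def by blast
lemma c_idl: "f \<in> CH X Y \<Longrightarrow> cc (cid X) f = f"
  using c_cat unfolding is_category_def by blast
lemma c_idr: "f \<in> CH X Y \<Longrightarrow> cc f (cid Y) = f"
  using c_cat unfolding is_category_def by blast
lemma c_assoc: "f \<in> CH W X \<Longrightarrow> g \<in> CH X Y \<Longrightarrow> h \<in> CH Y Z \<Longrightarrow> cc (cc f g) h = cc f (cc g h)"
  using c_cat unfolding is_category_def by blast

lemma p1_ty: "Pr X Y = A \<Longrightarrow> X = B \<Longrightarrow> p1 X Y \<in> CH A B"
  using ax(1) unfolding cartesian_ax_def by blast
lemma p2_ty: "Pr X Y = A \<Longrightarrow> Y = B \<Longrightarrow> p2 X Y \<in> CH A B"
  using ax(1) unfolding cartesian_ax_def by blast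
lemma tup_ty: "f \<in> CH Z X \<Longrightarrow> g \<in> CH Z' Y \<Longrightarrow> Z = Z' \<Longrightarrow> Z = A \<Longrightarrow> Pr X Y = B \<Longrightarrow> cTup S f g \<in> CH A B"
  using ax(1) unfolding cartesian_ax_def by blast
lemma tup_p1: "f \<in> CH Z X \<Longrightarrow> g \<in> CH Z Y \<Longrightarrow> cc (cTup S f g) (p1 X Y) = f"
  using ax(1) unfolding cartesian_ax_def by blast
lemma tup_p2: "f \<in> CH Z X \<Longrightarrow> g \<in> CH Z Y \<Longrightarrow> cc (cTup S f g) (p2 X Y) = g"
  using ax(1) unfolding cartesian_ax_def by blast
lemma tup_eta: "h \<in> CH Z (Pr X Y) \<Longrightarrow> cTup S (cc h (p1 X Y)) (cc h (p2 X Y)) = h"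
  using ax(1) unfolding cartesian_ax_def by blast
lemma bang_ty: "X = A \<Longrightarrow> cTrm S = B \<Longrightarrow> cBang S X \<in> CH A B"
  using ax(1) unfolding cartesian_ax_def by blast
lemma bang_uniq: "f \<in> CH X (cTrm S) \<Longrightarrow> f = cBang S X"
  using ax(1) unfolding cartesian_ax_def by blast

lemma l_cat: "is_category (lHom S) (lId S) (lCmp S)" using ax(2) unfolding strict_smc_ax_def by auto

lemma l_id_ty: "X = A \<Longrightarrow> X = B \<Longrightarrow> lid X \<in> LH A B"
  using l_cat unfolding is_category_def by auto
lemma l_cmp_ty: "f \<in> LH X Y \<Longrightarrow> g \<in> LH Y' Z \<Longrightarrow> Y = Y' \<Longrightarrow> X = X' \<Longrightarrow> Z = Z' \<Longrightarrow> lc f g \<in> LH X' Z'"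
  using l_cat unfolding is_category_def by blast
lemma l_idl: "f \<in> LH X Y \<Longrightarrow> lc (lid X) f = f"
  using l_cat unfolding is_category_def by blast
lemma l_idr: "f \<in> LH X Y \<Longrightarrow> lc f (lid Y) = f"
  using l_cat unfolding is_category_def by blast
lemma l_assoc: "f \<in> LH W X \<Longrightarrow> g \<in> LH X Y \<Longrightarrow> h \<in> LH Y Z \<Longrightarrow> lc (lc f g) h = lc f (lc g h)"
  using l_cat unfolding is_category_def by blast

lemma l_ten_ty: "f \<in> LH A B \<Longrightarrow> g \<in> LH C D \<Longrightarrow> lT A C = X \<Longrightarrow> lT B D = Y \<Longrightarrow> lt f g \<in> LH X Y"
  using ax(2) unfolding strict_smc_ax_def by (auto simp del: ten_assoc_obj ten_unit_l ten_unit_r)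
lemma ten_id: "lt (lid A) (lid B) = lid (lT A B)"
  using ax(2) unfolding strict_smc_ax_def by (auto simp del: ten_assoc_obj ten_unit_l ten_unit_r)
lemma interchange: "f \<in> LH A B \<Longrightarrow> f' \<in> LH B C \<Longrightarrow> g \<in> LH D E \<Longrightarrow> g' \<in> LH E G \<Longrightarrow>
   lt (lc f f') (lc g g') = lc (lt f g) (lt f' g')"
  using ax(2) unfolding strict_smc_ax_def by (auto simp del: ten_assoc_obj ten_unit_l ten_unit_r)
lemma ten_assoc: "f \<in> LH A A' \<Longrightarrow> g \<in> LH B B' \<Longrightarrow> h \<in> LH C C' \<Longrightarrow> lt (lt f g) h = lt f (lt g h)"
  using ax(2) unfolding strict_smc_ax_def by (auto simp del: ten_assoc_obj ten_unit_l ten_unit_r)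
lemma ten_unitl: "f \<in> LH A B \<Longrightarrow> lt (lid Iu) f = f"
  using ax(2) unfolding strict_smc_ax_def by (auto simp del: ten_assoc_obj ten_unit_l ten_unit_r)
lemma ten_unitr: "f \<in> LH A B \<Longrightarrow> lt f (lid Iu) = f"
  using ax(2) unfolding strict_smc_ax_def by (auto simp del: ten_assoc_obj ten_unit_l ten_unit_r)
lemma sym_ty: "lT A B = X \<Longrightarrow> lT B A = Y \<Longrightarrow> lSym S A B \<in> LH X Y"
  using ax(2) unfolding strict_smc_ax_def by (auto simp del: ten_assoc_obj ten_unit_l ten_unit_r)
lemma sym_nat: "f \<in> LH A A' \<Longrightarrow> g \<in> LH B B' \<Longrightarrow> lc (lt f g) (lSym S A' B') = lc (lSym S A B) (lt g f)"
  using ax(2) unfolding strict_smc_ax_def by (auto simp del: ten_assoc_obj ten_unit_l ten_unit_r)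
lemma sym_inv: "lc (lSym S A B) (lSym S B A) = lid (lT A B)"
  using ax(2) unfolding strict_smc_ax_def by (auto simp del: ten_assoc_obj ten_unit_l ten_unit_r)
lemma sym_unitr: "lSym S A Iu = lid A"
  using ax(2) unfolding strict_smc_ax_def by (auto simp del: ten_assoc_obj ten_unit_l ten_unit_r)
lemma sym_unitl: "lSym S Iu A = lid A"
proof -
  have "lc (lSym S A Iu) (lSym S Iu A) = lid A" using sym_inv[of A Iu] by simp
  hence "lc (lid A) (lSym S Iu A) = lid A" by (simp add: sym_unitr)
  moreover have "lSym S Iu A \<in> LH A A" by (rule sym_ty) simp_all
  ultimately show ?thesis using l_idl by metis
qed

lemma Ffun: "is_functor (cHom S) (cId S) (cCmp S) (lHom S) (lId S) (lCmp S) (FO S) (FM S)"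
  and Ufun: "is_functor (lHom S) (lId S) (lCmp S) (cHom S) (cId S) (cCmp S) (UO S) (UM S)"
  using ax(5) unfolding adjunction_ax_def by auto

lemma F_ty: "f \<in> CH X Y \<Longrightarrow> Fo X = A \<Longrightarrow> Fo Y = B \<Longrightarrow> Fm f \<in> LH A B"
  using Ffun unfolding is_functor_def by blast
lemma F_id: "Fm (cid X) = lid (Fo X)"
  using Ffun unfolding is_functor_def by blast
lemma F_cmp: "f \<in> CH X Y \<Longrightarrow> g \<in> CH Y Z \<Longrightarrow> Fm (cc f g) = lc (Fm f) (Fm g)"
  using Ffun unfolding is_functor_def by blast
lemma U_ty: "f \<in> LH X Y \<Longrightarrow> Uo X = A \<Longrightarrow> Uo Y = B \<Longrightarrow> Um f \<in> CH A B"
  using Ufun unfolding is_functor_def by blast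
lemma U_id: "Um (lid X) = cid (Uo X)"
  using Ufun unfolding is_functor_def by blast
lemma U_cmp: "f \<in> LH X Y \<Longrightarrow> g \<in> LH Y Z \<Longrightarrow> Um (lc f g) = cc (Um f) (Um g)"
  using Ufun unfolding is_functor_def by blast
lemma eta_ty: "X = A \<Longrightarrow> Uo (Fo X) = B \<Longrightarrow> eta X \<in> CH A B"
  using ax(5) unfolding adjunction_ax_def by blast
lemma eta_nat: "f \<in> CH X Y \<Longrightarrow> cc f (eta Y) = cc (eta X) (Um (Fm f))"
  using ax(5) unfolding adjunction_ax_def by blast

lemma mF_ty: "lT (Fo X) (Fo Y) = A \<Longrightarrow> Fo (Pr X Y) = B \<Longrightarrow> mF S X Y \<in> LH A B"
  using ax(6) unfolding F_strong_ax_def by blast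
lemma mFi_ty: "Fo (Pr X Y) = A \<Longrightarrow> lT (Fo X) (Fo Y) = B \<Longrightarrow> mFi S X Y \<in> LH A B"
  using ax(6) unfolding F_strong_ax_def by blast
lemma mF1_ty: "Iu = A \<Longrightarrow> Fo (cTrm S) = B \<Longrightarrow> mF1 S \<in> LH A B"
  using ax(6) unfolding F_strong_ax_def by blast
lemma mF1i_ty: "Fo (cTrm S) = A \<Longrightarrow> Iu = B \<Longrightarrow> mF1i S \<in> LH A B"
  using ax(6) unfolding F_strong_ax_def by blast
lemma m_mi: "lc (mF S X Y) (mFi S X Y) = lid (lT (Fo X) (Fo Y))"
  and mi_m: "lc (mFi S X Y) (mF S X Y) = lid (Fo (Pr X Y))"
  and m1_m1i: "lc (mF1 S) (mF1i S) = lid Iu"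
  and m1i_m1: "lc (mF1i S) (mF1 S) = lid (Fo (cTrm S))"
  using ax(6) unfolding F_strong_ax_def by blast+
lemma m_nat: "f \<in> CH X X' \<Longrightarrow> g \<in> CH Y Y' \<Longrightarrow>
   lc (lt (Fm f) (Fm g)) (mF S X' Y') = lc (mF S X Y) (Fm (prodC S X Y f g))"
  using ax(6) unfolding F_strong_ax_def by blast
lemma m_assoc: "lc (lc (lt (mF S X Y) (lid (Fo Z))) (mF S (Pr X Y) Z)) (Fm (assocC S X Y Z))
               = lc (lt (lid (Fo X)) (mF S Y Z)) (mF S X (Pr Y Z))"
  using ax(6) unfolding F_strong_ax_def by blast
lemma m_unitl: "lc (lc (lt (mF1 S) (lid (Fo X))) (mF S (cTrm S) X)) (Fm (p2 (cTrm S) X)) = lid (Fo X)"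
  using ax(6) unfolding F_strong_ax_def by blast
lemma m_unitr: "lc (lc (lt (lid (Fo X)) (mF1 S)) (mF S X (cTrm S))) (Fm (p1 X (cTrm S))) = lid (Fo X)"
  using ax(6) unfolding F_strong_ax_def by blast

lemma nU_ty: "Pr (Uo A) (Uo B) = X \<Longrightarrow> Uo (lT A B) = Y \<Longrightarrow> nU S A B \<in> CH X Y"
  using ax(7) unfolding U_lax_ax_def by blast
lemma nU1_ty: "cTrm S = X \<Longrightarrow> Uo Iu = Y \<Longrightarrow> nU1 S \<in> CH X Y"
  using ax(7) unfolding U_lax_ax_def by blast
lemma nU_nat: "u \<in> LH A A' \<Longrightarrow> v \<in> LH B B' \<Longrightarrow>
   cc (prodC S (Uo A) (Uo B) (Um u) (Um v)) (nU S A' B') = cc (nU S A B) (Um (lt u v))"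
  using ax(7) unfolding U_lax_ax_def by blast
lemma nU_unitl: "cc (prodC S (cTrm S) (Uo A) (nU1 S) (cid (Uo A))) (nU S Iu A) = p2 (cTrm S) (Uo A)"
  using ax(7) unfolding U_lax_ax_def by blast
lemma madj_1: "cc (nU1 S) (Um (mF1 S)) = eta (cTrm S)"
  using ax(8) unfolding monoidal_adj_ax_def by blast

lemma TM_ty: "h \<in> CH X Y \<Longrightarrow> lT (Fo X) (lam S X) = A \<Longrightarrow> lam S Y = B \<Longrightarrow> TM S h \<in> LH A B"
  using ax(9) unfolding T_functor_ax_def Tf_def LShom_def by auto
lemma TM_cmp: "f \<in> CH X Y \<Longrightarrow> g \<in> CH Y Z \<Longrightarrow>
   TM S (cc f g) = lc (lc (lt (cX X) (lid (lam S X))) (lt (Fm f) (TM S f))) (TM S g)"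
  using ax(9) unfolding T_functor_ax_def Tf_def LScmp_def by auto

lemma w_ty: "Fo X = A \<Longrightarrow> Iu = B \<Longrightarrow> w X \<in> LH A B"
  unfolding weak_def by (auto intro!: l_cmp_ty F_ty bang_ty mF1i_ty)
lemma diag_ty: "X = A \<Longrightarrow> Pr X X = B \<Longrightarrow> diagC S X \<in> CH A B"
  unfolding diagC_def by (auto intro!: tup_ty c_id_ty)
lemma c_ty: "Fo X = A \<Longrightarrow> lT (Fo X) (Fo X) = B \<Longrightarrow> cX X \<in> LH A B"
  unfolding contr_def by (auto intro!: l_cmp_ty F_ty diag_ty mFi_ty)

lemma prodC_ty: "f \<in> CH X X' \<Longrightarrow> g \<in> CH Y Y' \<Longrightarrow> Pr X Y = A \<Longrightarrow> Pr X' Y' = B \<Longrightarrow> prodC S X Y f g \<in> CH A B"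
  unfolding prodC_def by (auto intro!: tup_ty c_cmp_ty p1_ty p2_ty)
lemma assocC_ty: "Pr (Pr X Y) Z = A \<Longrightarrow> Pr X (Pr Y Z) = B \<Longrightarrow> assocC S X Y Z \<in> CH A B"
  unfolding assocC_def by (auto intro!: tup_ty c_cmp_ty p1_ty p2_ty)

lemma Bp1_ty: "lBip S A B = X \<Longrightarrow> A = Y \<Longrightarrow> lBp1 S A B \<in> LH X Y"
  using ax(4) unfolding products_L_ax_def by blast
lemma Bp2_ty: "lBip S A B = X \<Longrightarrow> B = Y \<Longrightarrow> lBp2 S A B \<in> LH X Y"
  using ax(4) unfolding products_L_ax_def by blast
lemma lTup_ty: "f \<in> LH C A \<Longrightarrow> g \<in> LH C' B \<Longrightarrow> C = C' \<Longrightarrow> C = X \<Longrightarrow> lBip S A B = Y \<Longrightarrow> lTup S f g \<in> LH X Y"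
  using ax(4) unfolding products_L_ax_def by blast
lemma lTup_p1: "f \<in> LH C A \<Longrightarrow> g \<in> LH C B \<Longrightarrow> lc (lTup S f g) (lBp1 S A B) = f"
  using ax(4) unfolding products_L_ax_def by blast
lemma lTup_p2: "f \<in> LH C A \<Longrightarrow> g \<in> LH C B \<Longrightarrow> lc (lTup S f g) (lBp2 S A B) = g"
  using ax(4) unfolding products_L_ax_def by blast
lemma zero_ty: "A = X \<Longrightarrow> B = Y \<Longrightarrow> lZero S A B \<in> LH X Y"
  using ax(3) unfolding additive_ax_def by auto
lemma inj2_ty: "B = X \<Longrightarrow> lBip S A B = Y \<Longrightarrow> inj2 S A B \<in> LH X Y"
  unfolding inj2_def by (auto intro!: lTup_ty zero_ty l_id_ty)
lemma inj2_p2: "lc (inj2 S A B) (lBp2 S A B) = lid B"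
  unfolding inj2_def by (rule lTup_p2) (auto intro!: zero_ty l_id_ty)

lemmas ty = c_id_ty c_cmp_ty p1_ty p2_ty tup_ty bang_ty l_id_ty l_cmp_ty l_ten_ty sym_ty F_ty U_ty
  eta_ty mF_ty mFi_ty mF1_ty mF1i_ty nU_ty nU1_ty TM_ty w_ty diag_ty c_ty prodC_ty assocC_ty
  Bp1_ty Bp2_ty lTup_ty zero_ty inj2_ty


lemma tup_comp:
  assumes "h \<in> CH W Z" "f \<in> CH Z X" "g \<in> CH Z Y"
  shows "cc h (cTup S f g) = cTup S (cc h f) (cc h g)"
proof -
  note T = ty assms
  have "cc h (cTup S f g) = cTup S (cc (cc h (cTup S f g)) (p1 X Y)) (cc (cc h (cTup S f g)) (p2 X Y))"
    by (rule tup_eta[symmetric]) (rule T | simp)+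
  also have "cc (cc h (cTup S f g)) (p1 X Y) = cc h (cc (cTup S f g) (p1 X Y))"
    by (rule c_assoc) (rule T | simp)+
  also have "cc (cc h (cTup S f g)) (p2 X Y) = cc h (cc (cTup S f g) (p2 X Y))"
    by (rule c_assoc) (rule T | simp)+
  finally show ?thesis using tup_p1[OF assms(2,3)] tup_p2[OF assms(2,3)] by simp
qed

lemma tup_pr: "cTup S (p1 X Y) (p2 X Y) = cid (Pr X Y)"
proof -
  have "cTup S (cc (cid (Pr X Y)) (p1 X Y)) (cc (cid (Pr X Y)) (p2 X Y)) = cid (Pr X Y)"
    by (rule tup_eta) (rule ty | simp)+
  moreover have "cc (cid (Pr X Y)) (p1 X Y) = p1 X Y" by (rule c_idl) (rule ty | simp)+
  moreover have "cc (cid (Pr X Y)) (p2 X Y) = p2 X Y" by (rule c_idl) (rule ty | simp)+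
  ultimately show ?thesis by simp
qed

lemma prodC_p1: assumes "f \<in> CH X X'" "g \<in> CH Y Y'"
  shows "cc (prodC S X Y f g) (p1 X' Y') = cc (p1 X Y) f"
  unfolding prodC_def using assms by (rule_tac tup_p1) (rule ty assms | simp)+
lemma prodC_p2: assumes "f \<in> CH X X'" "g \<in> CH Y Y'"
  shows "cc (prodC S X Y f g) (p2 X' Y') = cc (p2 X Y) g"
  unfolding prodC_def using assms by (rule_tac tup_p2) (rule ty assms | simp)+

lemma tup_prodC:
  assumes "a \<in> CH Z X" "b \<in> CH Z Y" "f \<in> CH X X'" "g \<in> CH Y Y'"
  shows "cc (cTup S a b) (prodC S X Y f g) = cTup S (cc a f) (cc b g)"
proof -
  note T = ty assms
  have "cc (cTup S a b) (prodC S X Y f g) = cTup S (cc (cTup S a b) (cc (p1 X Y) f)) (cc (cTup S a b) (cc (p2 X Y) g))"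
    unfolding prodC_def by (rule tup_comp) (rule T | simp)+
  also have "cc (cTup S a b) (cc (p1 X Y) f) = cc (cc (cTup S a b) (p1 X Y)) f"
    by (rule c_assoc[symmetric]) (rule T | simp)+
  also have "cc (cTup S a b) (cc (p2 X Y) g) = cc (cc (cTup S a b) (p2 X Y)) g"
    by (rule c_assoc[symmetric]) (rule T | simp)+
  finally show ?thesis using tup_p1[OF assms(1,2)] tup_p2[OF assms(1,2)] by simp
qed

lemma prodC_cmp:
  assumes "f \<in> CH X X'" "g \<in> CH Y Y'" "f' \<in> CH X' X''" "g' \<in> CH Y' Y''"
  shows "cc (prodC S X Y f g) (prodC S X' Y' f' g') = prodC S X Y (cc f f') (cc g g')"
proof -
  note T = ty assms
  have "cc (prodC S X Y f g) (prodC S X' Y' f' g') = cTup S (cc (cc (p1 X Y) f) f') (cc (cc (p2 X Y) g) g')"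
    unfolding prodC_def[of S X Y f g] by (rule tup_prodC) (rule T | simp)+
  also have "cc (cc (p1 X Y) f) f' = cc (p1 X Y) (cc f f')" by (rule c_assoc) (rule T | simp)+
  also have "cc (cc (p2 X Y) g) g' = cc (p2 X Y) (cc g g')" by (rule c_assoc) (rule T | simp)+
  finally show ?thesis unfolding prodC_def .
qed

lemma diag_comp: assumes "f \<in> CH X Y" shows "cc f (diagC S Y) = cTup S f f"
proof -
  note T = ty assms
  have "cc f (diagC S Y) = cTup S (cc f (cid Y)) (cc f (cid Y))"
    unfolding diagC_def by (rule tup_comp) (rule T | simp)+
  thus ?thesis using c_idr[OF assms] by simp
qed

lemma diag_prodC: assumes "f \<in> CH X Y" "g \<in> CH X Z"
  shows "cc (diagC S X) (prodC S X X f g) = cTup S f g"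
proof -
  note T = ty assms
  have "cc (diagC S X) (prodC S X X f g) = cTup S (cc (cid X) f) (cc (cid X) g)"
    unfolding diagC_def by (rule tup_prodC) (rule T | simp)+
  thus ?thesis using c_idl assms by simp
qed

lemma cid_tup: assumes "f \<in> CH X Y" "g \<in> CH X Z" shows "cc (cid X) (cTup S f g) = cTup S f g"
  by (rule c_idl) (rule ty assms | simp)+


lemma ten_split1: assumes "f \<in> LH A B" "g \<in> LH C D"
  shows "lt f g = lc (lt f (lid C)) (lt (lid B) g)"
proof -
  note T = ty assms
  have "lt f g = lt (lc f (lid B)) (lc (lid C) g)" using l_idr[OF assms(1)] l_idl[OF assms(2)] by simp
  also have "... = lc (lt f (lid C)) (lt (lid B) g)" by (rule interchange) (rule T | simp)+
  finally show ?thesis .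
qed

lemma ten_split2: assumes "f \<in> LH A B" "g \<in> LH C D"
  shows "lt f g = lc (lt (lid A) g) (lt f (lid D))"
proof -
  note T = ty assms
  have "lt f g = lt (lc (lid A) f) (lc g (lid D))" using l_idl[OF assms(1)] l_idr[OF assms(2)] by simp
  also have "... = lc (lt (lid A) g) (lt f (lid D))" by (rule interchange) (rule T | simp)+
  finally show ?thesis .
qed

lemma absorb_l: assumes "k \<in> LH K Iu" "f \<in> LH A B"
  shows "lt k f = lc (lt k (lid A)) f"
  using ten_split1[OF assms] ten_unitl[OF assms(2)] by simp

lemma absorb_r: assumes "k \<in> LH K Iu" "f \<in> LH A B"
  shows "lt f k = lc (lt (lid A) k) f"
  using ten_split2[OF assms(2,1)] ten_unitr[OF assms(2)] by simp

lemma W_nat: assumes "f \<in> CH X Y" shows "lc (Fm f) (w Y) = w X"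
proof -
  note T = ty assms
  have "lc (Fm f) (w Y) = lc (lc (Fm f) (Fm (cBang S Y))) (mF1i S)"
    unfolding weak_def by (rule l_assoc[symmetric]) (rule T | simp)+
  also have "... = lc (Fm (cc f (cBang S Y))) (mF1i S)" by (subst F_cmp) (rule T | simp)+
  also have "cc f (cBang S Y) = cBang S X" by (rule bang_uniq) (rule T | simp)+
  finally show ?thesis unfolding weak_def .
qed

lemma m2_unit: "lc (mF S (cTrm S) Y) (Fm (p2 (cTrm S) Y)) = lt (mF1i S) (lid (Fo Y))"
proof -
  note T = ty
  have "lt (mF1i S) (lid (Fo Y)) = lc (lt (mF1i S) (lid (Fo Y))) (lid (Fo Y))"
    by (rule l_idr[symmetric]) (rule T | simp)+
  also have "... = lc (lt (mF1i S) (lid (Fo Y))) (lc (lc (lt (mF1 S) (lid (Fo Y))) (mF S (cTrm S) Y)) (Fm (p2 (cTrm S) Y)))"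
    by (simp only: m_unitl)
  also have "... = lc (lt (mF1i S) (lid (Fo Y))) (lc (lt (mF1 S) (lid (Fo Y))) (lc (mF S (cTrm S) Y) (Fm (p2 (cTrm S) Y))))"
    by (subst l_assoc) (rule T | simp)+
  also have "... = lc (lc (lt (mF1i S) (lid (Fo Y))) (lt (mF1 S) (lid (Fo Y)))) (lc (mF S (cTrm S) Y) (Fm (p2 (cTrm S) Y)))"
    by (rule l_assoc[symmetric]) (rule T | simp)+
  also have "lc (lt (mF1i S) (lid (Fo Y))) (lt (mF1 S) (lid (Fo Y))) = lt (lc (mF1i S) (mF1 S)) (lc (lid (Fo Y)) (lid (Fo Y)))"
    by (rule interchange[symmetric]) (rule T | simp)+
  also have "... = lid (lT (Fo (cTrm S)) (Fo Y))" by (simp add: m1i_m1 l_idl[OF l_id_ty] ten_id)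
  also have "lc (lid (lT (Fo (cTrm S)) (Fo Y))) (lc (mF S (cTrm S) Y) (Fm (p2 (cTrm S) Y))) = lc (mF S (cTrm S) Y) (Fm (p2 (cTrm S) Y))"
    by (rule l_idl) (rule T | simp)+
  finally show ?thesis ..
qed


lemma m1_unit: "lc (mF S X (cTrm S)) (Fm (p1 X (cTrm S))) = lt (lid (Fo X)) (mF1i S)"
proof -
  note T = ty
  have "lt (lid (Fo X)) (mF1i S) = lc (lt (lid (Fo X)) (mF1i S)) (lid (Fo X))"
    by (rule l_idr[symmetric]) (rule T | simp)+
  also have "... = lc (lt (lid (Fo X)) (mF1i S)) (lc (lc (lt (lid (Fo X)) (mF1 S)) (mF S X (cTrm S))) (Fm (p1 X (cTrm S))))"
    by (simp only: m_unitr)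
  also have "... = lc (lt (lid (Fo X)) (mF1i S)) (lc (lt (lid (Fo X)) (mF1 S)) (lc (mF S X (cTrm S)) (Fm (p1 X (cTrm S)))))"
    by (subst l_assoc) (rule T | simp)+
  also have "... = lc (lc (lt (lid (Fo X)) (mF1i S)) (lt (lid (Fo X)) (mF1 S))) (lc (mF S X (cTrm S)) (Fm (p1 X (cTrm S))))"
    by (rule l_assoc[symmetric]) (rule T | simp)+
  also have "lc (lt (lid (Fo X)) (mF1i S)) (lt (lid (Fo X)) (mF1 S)) = lt (lc (lid (Fo X)) (lid (Fo X))) (lc (mF1i S) (mF1 S))"
    by (rule interchange[symmetric]) (rule T | simp)+
  also have "... = lid (lT (Fo X) (Fo (cTrm S)))" by (simp add: m1i_m1 l_idl[OF l_id_ty] ten_id)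
  also have "lc (lid (lT (Fo X) (Fo (cTrm S)))) (lc (mF S X (cTrm S)) (Fm (p1 X (cTrm S)))) = lc (mF S X (cTrm S)) (Fm (p1 X (cTrm S)))"
    by (rule l_idl) (rule T | simp)+
  finally show ?thesis ..
qed

lemma m_p2: "lc (mF S X Y) (Fm (p2 X Y)) = lt (w X) (lid (Fo Y))"
proof -
  note T = ty
  define P where "P = prodC S X Y (cBang S X) (cid Y)"
  have Pty: "P \<in> CH (Pr X Y) (Pr (cTrm S) Y)" unfolding P_def by (rule T | simp)+
  note T = T Pty
  have pp: "cc P (p2 (cTrm S) Y) = p2 X Y" unfolding P_def
    by (subst prodC_p2, (rule T | simp)+, rule c_idr, (rule T | simp)+)
  have "lc (mF S X Y) (Fm (p2 X Y)) = lc (mF S X Y) (Fm (cc P (p2 (cTrm S) Y)))" by (simp only: pp)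
  also have "... = lc (mF S X Y) (lc (Fm P) (Fm (p2 (cTrm S) Y)))" by (subst F_cmp) (rule T | simp)+
  also have "... = lc (lc (mF S X Y) (Fm P)) (Fm (p2 (cTrm S) Y))" by (rule l_assoc[symmetric]) (rule T | simp)+
  also have "lc (mF S X Y) (Fm P) = lc (lt (Fm (cBang S X)) (Fm (cid Y))) (mF S (cTrm S) Y)"
    unfolding P_def by (rule m_nat[symmetric]) (rule T | simp)+
  also have "lc (lc (lt (Fm (cBang S X)) (Fm (cid Y))) (mF S (cTrm S) Y)) (Fm (p2 (cTrm S) Y))
     = lc (lt (Fm (cBang S X)) (Fm (cid Y))) (lc (mF S (cTrm S) Y) (Fm (p2 (cTrm S) Y)))"
    by (rule l_assoc) (rule T | simp)+
  also have "... = lc (lt (Fm (cBang S X)) (lid (Fo Y))) (lt (mF1i S) (lid (Fo Y)))"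
    by (simp only: m2_unit F_id)
  also have "... = lt (lc (Fm (cBang S X)) (mF1i S)) (lc (lid (Fo Y)) (lid (Fo Y)))"
    by (rule interchange[symmetric]) (rule T | simp)+
  also have "... = lt (w X) (lid (Fo Y))" unfolding weak_def by (subst l_idl) (rule T | simp)+
  finally show ?thesis .
qed

lemma m_p1: "lc (mF S X Y) (Fm (p1 X Y)) = lt (lid (Fo X)) (w Y)"
proof -
  note T = ty
  define P where "P = prodC S X Y (cid X) (cBang S Y)"
  have Pty: "P \<in> CH (Pr X Y) (Pr X (cTrm S))" unfolding P_def by (rule T | simp)+
  note T = T Pty
  have pp: "cc P (p1 X (cTrm S)) = p1 X Y" unfolding P_def
    by (subst prodC_p1, (rule T | simp)+, rule c_idr, (rule T | simp)+)
  have "lc (mF S X Y) (Fm (p1 X Y)) = lc (mF S X Y) (Fm (cc P (p1 X (cTrm S))))" by (simp only: pp)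
  also have "... = lc (mF S X Y) (lc (Fm P) (Fm (p1 X (cTrm S))))" by (subst F_cmp) (rule T | simp)+
  also have "... = lc (lc (mF S X Y) (Fm P)) (Fm (p1 X (cTrm S)))" by (rule l_assoc[symmetric]) (rule T | simp)+
  also have "lc (mF S X Y) (Fm P) = lc (lt (Fm (cid X)) (Fm (cBang S Y))) (mF S X (cTrm S))"
    unfolding P_def by (rule m_nat[symmetric]) (rule T | simp)+
  also have "lc (lc (lt (Fm (cid X)) (Fm (cBang S Y))) (mF S X (cTrm S))) (Fm (p1 X (cTrm S)))
     = lc (lt (Fm (cid X)) (Fm (cBang S Y))) (lc (mF S X (cTrm S)) (Fm (p1 X (cTrm S))))"
    by (rule l_assoc) (rule T | simp)+
  also have "... = lc (lt (lid (Fo X)) (Fm (cBang S Y))) (lt (lid (Fo X)) (mF1i S))"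
    by (simp only: m1_unit F_id)
  also have "... = lt (lc (lid (Fo X)) (lid (Fo X))) (lc (Fm (cBang S Y)) (mF1i S))"
    by (rule interchange[symmetric]) (rule T | simp)+
  also have "... = lt (lid (Fo X)) (w Y)" unfolding weak_def by (subst l_idl) (rule T | simp)+
  finally show ?thesis .
qed

lemma mi_p2: "lc (mFi S X Y) (lt (w X) (lid (Fo Y))) = Fm (p2 X Y)"
proof -
  note T = ty
  have "lc (mFi S X Y) (lt (w X) (lid (Fo Y))) = lc (mFi S X Y) (lc (mF S X Y) (Fm (p2 X Y)))" by (simp only: m_p2)
  also have "... = lc (lc (mFi S X Y) (mF S X Y)) (Fm (p2 X Y))" by (rule l_assoc[symmetric]) (rule T | simp)+
  also have "... = Fm (p2 X Y)" by (simp only: mi_m, rule l_idl) (rule T | simp)+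
  finally show ?thesis .
qed

lemma mi_p1: "lc (mFi S X Y) (lt (lid (Fo X)) (w Y)) = Fm (p1 X Y)"
proof -
  note T = ty
  have "lc (mFi S X Y) (lt (lid (Fo X)) (w Y)) = lc (mFi S X Y) (lc (mF S X Y) (Fm (p1 X Y)))" by (simp only: m_p1)
  also have "... = lc (lc (mFi S X Y) (mF S X Y)) (Fm (p1 X Y))" by (rule l_assoc[symmetric]) (rule T | simp)+
  also have "... = Fm (p1 X Y)" by (simp only: mi_m, rule l_idl) (rule T | simp)+
  finally show ?thesis .
qed

lemma counit_l: "lc (cX X) (lt (w X) (lid (Fo X))) = lid (Fo X)"
proof -
  note T = ty
  have "lc (cX X) (lt (w X) (lid (Fo X))) = lc (Fm (diagC S X)) (lc (mFi S X X) (lt (w X) (lid (Fo X))))"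
    unfolding contr_def by (rule l_assoc) (rule T | simp)+
  also have "... = lc (Fm (diagC S X)) (Fm (p2 X X))" by (simp only: mi_p2)
  also have "... = Fm (cc (diagC S X) (p2 X X))" by (rule F_cmp[symmetric]) (rule T | simp)+
  also have "cc (diagC S X) (p2 X X) = cid X" unfolding diagC_def by (rule tup_p2) (rule T | simp)+
  finally show ?thesis by (simp add: F_id)
qed

lemma counit_r: "lc (cX X) (lt (lid (Fo X)) (w X)) = lid (Fo X)"
proof -
  note T = ty
  have "lc (cX X) (lt (lid (Fo X)) (w X)) = lc (Fm (diagC S X)) (lc (mFi S X X) (lt (lid (Fo X)) (w X)))"
    unfolding contr_def by (rule l_assoc) (rule T | simp)+
  also have "... = lc (Fm (diagC S X)) (Fm (p1 X X))" by (simp only: mi_p1)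
  also have "... = Fm (cc (diagC S X) (p1 X X))" by (rule F_cmp[symmetric]) (rule T | simp)+
  also have "cc (diagC S X) (p1 X X) = cid X" unfolding diagC_def by (rule tup_p1) (rule T | simp)+
  finally show ?thesis by (simp add: F_id)
qed


lemma mFi_nat: assumes "f \<in> CH X X'" "g \<in> CH Y Y'"
  shows "lc (Fm (prodC S X Y f g)) (mFi S X' Y') = lc (mFi S X Y) (lt (Fm f) (Fm g))"
proof -
  note T = ty assms
  define P where "P = prodC S X Y f g"
  have Pty: "P \<in> CH (Pr X Y) (Pr X' Y')" unfolding P_def by (rule T | simp)+
  note T = T Pty
  have "Fm P = lc (lid (Fo (Pr X Y))) (Fm P)" by (rule l_idl[symmetric]) (rule T | simp)+
  also have "... = lc (lc (mFi S X Y) (mF S X Y)) (Fm P)" by (simp only: mi_m)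
  also have "... = lc (mFi S X Y) (lc (mF S X Y) (Fm P))" by (rule l_assoc) (rule T | simp)+
  also have "lc (mF S X Y) (Fm P) = lc (lt (Fm f) (Fm g)) (mF S X' Y')" unfolding P_def
    by (rule m_nat[symmetric]) (rule T | simp)+
  finally have e1: "Fm P = lc (mFi S X Y) (lc (lt (Fm f) (Fm g)) (mF S X' Y'))" .
  have "lc (Fm P) (mFi S X' Y') = lc (lc (mFi S X Y) (lc (lt (Fm f) (Fm g)) (mF S X' Y'))) (mFi S X' Y')"
    by (simp only: e1)
  also have "... = lc (mFi S X Y) (lc (lc (lt (Fm f) (Fm g)) (mF S X' Y')) (mFi S X' Y'))"
    by (rule l_assoc) (rule T | simp)+
  also have "lc (lc (lt (Fm f) (Fm g)) (mF S X' Y')) (mFi S X' Y') = lc (lt (Fm f) (Fm g)) (lc (mF S X' Y') (mFi S X' Y'))"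
    by (rule l_assoc) (rule T | simp)+
  also have "... = lt (Fm f) (Fm g)" by (simp only: m_mi, rule l_idr) (rule T | simp)+
  finally show ?thesis unfolding P_def .
qed

lemma c_nat: assumes "f \<in> CH X Y"
  shows "lc (Fm f) (cX Y) = lc (cX X) (lt (Fm f) (Fm f))"
proof -
  note T = ty assms
  have "lc (Fm f) (cX Y) = lc (lc (Fm f) (Fm (diagC S Y))) (mFi S Y Y)"
    unfolding contr_def by (rule l_assoc[symmetric]) (rule T | simp)+
  also have "... = lc (Fm (cc f (diagC S Y))) (mFi S Y Y)" by (subst F_cmp) (rule T | simp)+
  also have "cc f (diagC S Y) = cc (diagC S X) (prodC S X X f f)"
    using diag_comp[OF assms] diag_prodC[OF assms assms] by simp
  also have "lc (Fm (cc (diagC S X) (prodC S X X f f))) (mFi S Y Y) = lc (lc (Fm (diagC S X)) (Fm (prodC S X X f f))) (mFi S Y Y)"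
    by (subst F_cmp) (rule T | simp)+
  also have "... = lc (Fm (diagC S X)) (lc (Fm (prodC S X X f f)) (mFi S Y Y))"
    by (rule l_assoc) (rule T | simp)+
  also have "... = lc (Fm (diagC S X)) (lc (mFi S X X) (lt (Fm f) (Fm f)))"
    by (simp only: mFi_nat[OF assms assms])
  also have "... = lc (cX X) (lt (Fm f) (Fm f))"
    unfolding contr_def by (rule l_assoc[symmetric]) (rule T | simp)+
  finally show ?thesis .
qed

lemma iso_cancel_l:
  assumes "a \<in> LH A B" "ai \<in> LH B A" "lc ai a = lid B" "f \<in> LH B C" "g \<in> LH B C" "lc a f = lc a g"
  shows "f = g"
proof -
  note T = ty assms
  have "f = lc (lc ai a) f" using assms(3) l_idl[OF assms(4)] by simp
  also have "... = lc ai (lc a f)" by (rule l_assoc) (rule T | simp)+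
  also have "... = lc ai (lc a g)" using assms(6) by simp
  also have "... = lc (lc ai a) g" by (rule l_assoc[symmetric]) (rule T | simp)+
  also have "... = g" using assms(3) l_idl[OF assms(5)] by simp
  finally show ?thesis .
qed

lemma iso_comp:
  assumes "a \<in> LH A B" "b \<in> LH B C" "ai \<in> LH B A" "bi \<in> LH C B" "lc a ai = lid A" "lc b bi = lid B"
  shows "lc (lc a b) (lc bi ai) = lid A"
proof -
  note T = ty assms
  have "lc (lc a b) (lc bi ai) = lc a (lc b (lc bi ai))" by (rule l_assoc) (rule T | simp)+
  also have "lc b (lc bi ai) = lc (lc b bi) ai" by (rule l_assoc[symmetric]) (rule T | simp)+
  also have "... = ai" using assms(6) l_idl[OF assms(3)] by simp
  finally show ?thesis using assms(5) by simp
qed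

lemma ten_iso: assumes "a \<in> LH A B" "ai \<in> LH B A" "lc a ai = lid A"
  shows "lc (lt a (lid C)) (lt ai (lid C)) = lid (lT A C)"
    and "lc (lt (lid C) a) (lt (lid C) ai) = lid (lT C A)"
proof -
  note T = ty assms
  have "lc (lt a (lid C)) (lt ai (lid C)) = lt (lc a ai) (lc (lid C) (lid C))"
    by (rule interchange[symmetric]) (rule T | simp)+
  thus "lc (lt a (lid C)) (lt ai (lid C)) = lid (lT A C)" using assms(3) l_idl[OF l_id_ty[OF refl refl]] ten_id by simp
  have "lc (lt (lid C) a) (lt (lid C) ai) = lt (lc (lid C) (lid C)) (lc a ai)"
    by (rule interchange[symmetric]) (rule T | simp)+
  thus "lc (lt (lid C) a) (lt (lid C) ai) = lid (lT C A)" using assms(3) l_idl[OF l_id_ty[OF refl refl]] ten_id by simp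
qed

lemma mFi_assoc:
  "lc (Fm (assocC S X Y Z)) (lc (mFi S X (Pr Y Z)) (lt (lid (Fo X)) (mFi S Y Z)))
   = lc (mFi S (Pr X Y) Z) (lt (mFi S X Y) (lid (Fo Z)))"
proof -
  note T = ty
  define Lm where "Lm = lc (lt (mF S X Y) (lid (Fo Z))) (mF S (Pr X Y) Z)"
  define Lmi where "Lmi = lc (mFi S (Pr X Y) Z) (lt (mFi S X Y) (lid (Fo Z)))"
  define Rm where "Rm = lc (lt (lid (Fo X)) (mF S Y Z)) (mF S X (Pr Y Z))"
  define Rmi where "Rmi = lc (mFi S X (Pr Y Z)) (lt (lid (Fo X)) (mFi S Y Z))"
  have ty1: "Lm \<in> LH (lT (Fo X) (lT (Fo Y) (Fo Z))) (Fo (Pr (Pr X Y) Z))" unfolding Lm_def by (rule T | simp)+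
  have ty2: "Lmi \<in> LH (Fo (Pr (Pr X Y) Z)) (lT (Fo X) (lT (Fo Y) (Fo Z)))" unfolding Lmi_def by (rule T | simp)+
  have ty3: "Rm \<in> LH (lT (Fo X) (lT (Fo Y) (Fo Z))) (Fo (Pr X (Pr Y Z)))" unfolding Rm_def by (rule T | simp)+
  have ty4: "Rmi \<in> LH (Fo (Pr X (Pr Y Z))) (lT (Fo X) (lT (Fo Y) (Fo Z)))" unfolding Rmi_def by (rule T | simp)+
  note T = T ty1 ty2 ty3 ty4
  have i1: "lc Lm Lmi = lid (lT (lT (Fo X) (Fo Y)) (Fo Z))" unfolding Lm_def Lmi_def
    by (rule iso_comp) (rule T ten_iso m_mi mi_m | simp)+
  have i2: "lc Lmi Lm = lid (Fo (Pr (Pr X Y) Z))" unfolding Lm_def Lmi_def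
    by (rule iso_comp) (rule T ten_iso m_mi mi_m | simp)+
  have i3: "lc Rm Rmi = lid (lT (Fo X) (lT (Fo Y) (Fo Z)))" unfolding Rm_def Rmi_def
    by (rule iso_comp) (rule T ten_iso m_mi mi_m | simp)+
  have ma: "lc Lm (Fm (assocC S X Y Z)) = Rm" unfolding Lm_def Rm_def by (rule m_assoc)
  have "lc (Fm (assocC S X Y Z)) Rmi = Lmi"
  proof (rule iso_cancel_l[where a = Lm and ai = Lmi])
    have "lc Lm (lc (Fm (assocC S X Y Z)) Rmi) = lc (lc Lm (Fm (assocC S X Y Z))) Rmi"
      by (rule l_assoc[symmetric]) (rule T | simp)+
    thus "lc Lm (lc (Fm (assocC S X Y Z)) Rmi) = lc Lm Lmi" using ma i1 i3 by simp
  qed (rule T i2 | simp)+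
  thus ?thesis unfolding Rmi_def Lmi_def .
qed


lemma assoc_diag: "cc (cTup S (diagC S X) (cid X)) (assocC S X X X) = cTup S (cid X) (diagC S X)"
proof -
  note T = ty
  define t where "t = cTup S (diagC S X) (cid X)"
  have tty: "t \<in> CH X (Pr (Pr X X) X)" unfolding t_def by (rule T | simp)+
  note T = T tty
  have "cc t (assocC S X X X) = cTup S (cc t (cc (p1 (Pr X X) X) (p1 X X)))
          (cc t (cTup S (cc (p1 (Pr X X) X) (p2 X X)) (p2 (Pr X X) X)))"
    unfolding assocC_def by (rule tup_comp) (rule T | simp)+
  also have "cc t (cTup S (cc (p1 (Pr X X) X) (p2 X X)) (p2 (Pr X X) X))
     = cTup S (cc t (cc (p1 (Pr X X) X) (p2 X X))) (cc t (p2 (Pr X X) X))"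
    by (rule tup_comp) (rule T | simp)+
  also have "cc t (cc (p1 (Pr X X) X) (p1 X X)) = cc (cc t (p1 (Pr X X) X)) (p1 X X)"
    by (rule c_assoc[symmetric]) (rule T | simp)+
  also have "cc t (cc (p1 (Pr X X) X) (p2 X X)) = cc (cc t (p1 (Pr X X) X)) (p2 X X)"
    by (rule c_assoc[symmetric]) (rule T | simp)+
  also have "cc t (p1 (Pr X X) X) = diagC S X" unfolding t_def by (rule tup_p1) (rule T | simp)+
  also have "cc t (p2 (Pr X X) X) = cid X" unfolding t_def by (rule tup_p2) (rule T | simp)+
  also have "cc (diagC S X) (p1 X X) = cid X" unfolding diagC_def by (rule tup_p1) (rule T | simp)+
  also have "cc (diagC S X) (p2 X X) = cid X" unfolding diagC_def by (rule tup_p2) (rule T | simp)+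
  finally show ?thesis unfolding t_def diagC_def .
qed

lemma coassoc: "lc (cX X) (lt (cX X) (lid (Fo X))) = lc (cX X) (lt (lid (Fo X)) (cX X))"
proof -
  note T = ty
  define D where "D = diagC S X"
  define P where "P = prodC S X X D (cid X)"
  define Q where "Q = prodC S X X (cid X) D"
  have Dty: "D \<in> CH X (Pr X X)" unfolding D_def by (rule T | simp)+
  have Pty: "P \<in> CH (Pr X X) (Pr (Pr X X) X)" unfolding P_def by (rule T Dty | simp)+
  have Qty: "Q \<in> CH (Pr X X) (Pr X (Pr X X))" unfolding Q_def by (rule T Dty | simp)+
  note T = T Dty Pty Qty
  have cd: "cX X = lc (Fm D) (mFi S X X)" unfolding contr_def D_def ..
  have ll: "lc (lid (Fo X)) (lid (Fo X)) = lid (Fo X)" by (rule l_idl) (rule T | simp)+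
  have s1: "lt (cX X) (lid (Fo X)) = lc (lt (Fm D) (Fm (cid X))) (lt (mFi S X X) (lid (Fo X)))"
  proof -
    have "lc (lt (Fm D) (Fm (cid X))) (lt (mFi S X X) (lid (Fo X))) = lt (lc (Fm D) (mFi S X X)) (lc (Fm (cid X)) (lid (Fo X)))"
      by (rule interchange[symmetric]) (rule T | simp)+
    thus ?thesis using cd ll F_id by simp
  qed
  have s2: "lt (lid (Fo X)) (cX X) = lc (lt (Fm (cid X)) (Fm D)) (lt (lid (Fo X)) (mFi S X X))"
  proof -
    have "lc (lt (Fm (cid X)) (Fm D)) (lt (lid (Fo X)) (mFi S X X)) = lt (lc (Fm (cid X)) (lid (Fo X))) (lc (Fm D) (mFi S X X))"
      by (rule interchange[symmetric]) (rule T | simp)+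
    thus ?thesis using cd ll F_id by simp
  qed
  have hl: "lc (cX X) (lt (cX X) (lid (Fo X))) = lc (Fm (cc D P)) (lc (mFi S (Pr X X) X) (lt (mFi S X X) (lid (Fo X))))"
  proof -
    have "lc (cX X) (lt (cX X) (lid (Fo X))) = lc (lc (Fm D) (mFi S X X)) (lc (lt (Fm D) (Fm (cid X))) (lt (mFi S X X) (lid (Fo X))))"
      using cd s1 by simp
    also have "... = lc (Fm D) (lc (mFi S X X) (lc (lt (Fm D) (Fm (cid X))) (lt (mFi S X X) (lid (Fo X)))))"
      by (rule l_assoc) (rule T | simp)+
    also have "lc (mFi S X X) (lc (lt (Fm D) (Fm (cid X))) (lt (mFi S X X) (lid (Fo X))))
       = lc (lc (mFi S X X) (lt (Fm D) (Fm (cid X)))) (lt (mFi S X X) (lid (Fo X)))"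
      by (rule l_assoc[symmetric]) (rule T | simp)+
    also have "lc (mFi S X X) (lt (Fm D) (Fm (cid X))) = lc (Fm P) (mFi S (Pr X X) X)"
      unfolding P_def by (rule mFi_nat[symmetric]) (rule T | simp)+
    also have "lc (lc (Fm P) (mFi S (Pr X X) X)) (lt (mFi S X X) (lid (Fo X)))
       = lc (Fm P) (lc (mFi S (Pr X X) X) (lt (mFi S X X) (lid (Fo X))))"
      by (rule l_assoc) (rule T | simp)+
    also have "lc (Fm D) (lc (Fm P) (lc (mFi S (Pr X X) X) (lt (mFi S X X) (lid (Fo X)))))
       = lc (lc (Fm D) (Fm P)) (lc (mFi S (Pr X X) X) (lt (mFi S X X) (lid (Fo X))))"
      by (rule l_assoc[symmetric]) (rule T | simp)+
    also have "lc (Fm D) (Fm P) = Fm (cc D P)" by (rule F_cmp[symmetric]) (rule T | simp)+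
    finally show ?thesis .
  qed
  have hr: "lc (cX X) (lt (lid (Fo X)) (cX X)) = lc (Fm (cc D Q)) (lc (mFi S X (Pr X X)) (lt (lid (Fo X)) (mFi S X X)))"
  proof -
    have "lc (cX X) (lt (lid (Fo X)) (cX X)) = lc (lc (Fm D) (mFi S X X)) (lc (lt (Fm (cid X)) (Fm D)) (lt (lid (Fo X)) (mFi S X X)))"
      using cd s2 by simp
    also have "... = lc (Fm D) (lc (mFi S X X) (lc (lt (Fm (cid X)) (Fm D)) (lt (lid (Fo X)) (mFi S X X))))"
      by (rule l_assoc) (rule T | simp)+
    also have "lc (mFi S X X) (lc (lt (Fm (cid X)) (Fm D)) (lt (lid (Fo X)) (mFi S X X)))
       = lc (lc (mFi S X X) (lt (Fm (cid X)) (Fm D))) (lt (lid (Fo X)) (mFi S X X))"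
      by (rule l_assoc[symmetric]) (rule T | simp)+
    also have "lc (mFi S X X) (lt (Fm (cid X)) (Fm D)) = lc (Fm Q) (mFi S X (Pr X X))"
      unfolding Q_def by (rule mFi_nat[symmetric]) (rule T | simp)+
    also have "lc (lc (Fm Q) (mFi S X (Pr X X))) (lt (lid (Fo X)) (mFi S X X))
       = lc (Fm Q) (lc (mFi S X (Pr X X)) (lt (lid (Fo X)) (mFi S X X)))"
      by (rule l_assoc) (rule T | simp)+
    also have "lc (Fm D) (lc (Fm Q) (lc (mFi S X (Pr X X)) (lt (lid (Fo X)) (mFi S X X))))
       = lc (lc (Fm D) (Fm Q)) (lc (mFi S X (Pr X X)) (lt (lid (Fo X)) (mFi S X X)))"
      by (rule l_assoc[symmetric]) (rule T | simp)+
    also have "lc (Fm D) (Fm Q) = Fm (cc D Q)" by (rule F_cmp[symmetric]) (rule T | simp)+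
    finally show ?thesis .
  qed
  have dq: "cc D Q = cc (cc D P) (assocC S X X X)"
  proof -
    have "cc D P = cTup S D (cid X)" unfolding D_def P_def by (rule diag_prodC) (rule T[unfolded D_def] | simp)+
    moreover have "cc D Q = cTup S (cid X) D" unfolding D_def Q_def by (rule diag_prodC) (rule T[unfolded D_def] | simp)+
    ultimately show ?thesis using assoc_diag unfolding D_def by simp
  qed
  have "lc (Fm (cc D Q)) (lc (mFi S X (Pr X X)) (lt (lid (Fo X)) (mFi S X X)))
      = lc (Fm (cc (cc D P) (assocC S X X X))) (lc (mFi S X (Pr X X)) (lt (lid (Fo X)) (mFi S X X)))"
    using dq by simp
  also have "... = lc (lc (Fm (cc D P)) (Fm (assocC S X X X))) (lc (mFi S X (Pr X X)) (lt (lid (Fo X)) (mFi S X X)))"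
    by (subst F_cmp) (rule T | simp)+
  also have "... = lc (Fm (cc D P)) (lc (Fm (assocC S X X X)) (lc (mFi S X (Pr X X)) (lt (lid (Fo X)) (mFi S X X))))"
    by (rule l_assoc) (rule T | simp)+
  also have "... = lc (Fm (cc D P)) (lc (mFi S (Pr X X) X) (lt (mFi S X X) (lid (Fo X))))"
    by (simp only: mFi_assoc)
  finally show ?thesis using hl hr by simp
qed


subsection \<open>LS basics\<close>

lemma cw_l: "lc (lt (cX X) (lid A)) (lt (lt (w X) (lid (Fo X))) (lid A)) = lid (lT (Fo X) A)"
proof -
  note T = ty
  have "lc (lt (cX X) (lid A)) (lt (lt (w X) (lid (Fo X))) (lid A)) = lt (lc (cX X) (lt (w X) (lid (Fo X)))) (lc (lid A) (lid A))"
    by (rule interchange[symmetric]) (rule T | simp)+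
  thus ?thesis using counit_l l_idl[OF l_id_ty[OF refl refl]] ten_id by simp
qed

lemma cw_r: "lc (lt (cX X) (lid A)) (lt (lt (lid (Fo X)) (w X)) (lid A)) = lid (lT (Fo X) A)"
proof -
  note T = ty
  have "lc (lt (cX X) (lid A)) (lt (lt (lid (Fo X)) (w X)) (lid A)) = lt (lc (cX X) (lt (lid (Fo X)) (w X))) (lc (lid A) (lid A))"
    by (rule interchange[symmetric]) (rule T | simp)+
  thus ?thesis using counit_r l_idl[OF l_id_ty[OF refl refl]] ten_id by simp
qed

lemma G1: assumes "f \<in> CH X Y" "u \<in> LH (lT (Fo X) A) B" "h \<in> LH B C"
  shows "lc (lc (lt (cX X) (lid A)) (lt (Fm f) u)) (lt (w Y) h) = lc u h"
proof -
  note T = ty assms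
  have "lc (lc (lt (cX X) (lid A)) (lt (Fm f) u)) (lt (w Y) h) = lc (lt (cX X) (lid A)) (lc (lt (Fm f) u) (lt (w Y) h))"
    by (rule l_assoc) (rule T | simp)+
  also have "lc (lt (Fm f) u) (lt (w Y) h) = lt (lc (Fm f) (w Y)) (lc u h)"
    by (rule interchange[symmetric]) (rule T | simp)+
  also have "lc (Fm f) (w Y) = w X" by (rule W_nat[OF assms(1)])
  also have "lt (w X) (lc u h) = lc (lt (w X) (lid (lT (Fo X) A))) (lc u h)"
    by (rule absorb_l) (rule T | simp)+
  also have "lid (lT (Fo X) A) = lt (lid (Fo X)) (lid A)" by (simp add: ten_id)
  also have "lt (w X) (lt (lid (Fo X)) (lid A)) = lt (lt (w X) (lid (Fo X))) (lid A)"
    by (rule ten_assoc[symmetric]) (rule T | simp)+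
  also have "lc (lt (cX X) (lid A)) (lc (lt (lt (w X) (lid (Fo X))) (lid A)) (lc u h))
     = lc (lc (lt (cX X) (lid A)) (lt (lt (w X) (lid (Fo X))) (lid A))) (lc u h)"
    by (rule l_assoc[symmetric]) (rule T | simp)+
  also have "... = lc u h" by (simp only: cw_l, rule l_idl) (rule T | simp)+
  finally show ?thesis .
qed

lemma G2: assumes "e \<in> LH (Fo X) B" shows "lc (cX X) (lt e (w X)) = e"
proof -
  note T = ty assms
  have "lc (cX X) (lt e (w X)) = lc (cX X) (lc (lt (lid (Fo X)) (w X)) e)"
    by (subst absorb_r) (rule T | simp)+
  also have "... = lc (lc (cX X) (lt (lid (Fo X)) (w X))) e" by (rule l_assoc[symmetric]) (rule T | simp)+
  also have "... = e" by (simp only: counit_r, rule l_idl) (rule T | simp)+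
  finally show ?thesis .
qed

lemma LS_mem: "(f,u) \<in> LShom S (X,A) (Y,B) \<longleftrightarrow> f \<in> CH X Y \<and> u \<in> LH (lT (Fo X) A) B"
  unfolding LShom_def by simp

lemma LScmp_pair: "LScmp S (X,A) (f,u) (g,v) = (cc f g, lc (lc (lt (cX X) (lid A)) (lt (Fm f) u)) v)"
  unfolding LScmp_def by simp

lemma LScmp_ty: assumes "h \<in> LShom S P Q" "k \<in> LShom S Q R" shows "LScmp S P h k \<in> LShom S P R"
proof -
  obtain X A where P: "P = (X,A)" by (cases P)
  obtain Y B where Q: "Q = (Y,B)" by (cases Q)
  obtain Z C where R: "R = (Z,C)" by (cases R)
  obtain f u where h: "h = (f,u)" by (cases h)
  obtain g v where k: "k = (g,v)" by (cases k)
  have a: "f \<in> CH X Y" "u \<in> LH (lT (Fo X) A) B" "g \<in> CH Y Z" "v \<in> LH (lT (Fo Y) B) C"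
    using assms unfolding P Q R h k LS_mem by auto
  note T = ty a
  show ?thesis unfolding P Q R h k LScmp_pair LS_mem by (rule conjI, (rule T | simp)+)+
qed

lemma LSid_ty: "LSid S P \<in> LShom S P P"
  unfolding LSid_def LShom_def by (auto intro!: c_id_ty l_ten_ty w_ty l_id_ty)

lemma LS_idl: assumes "h \<in> LShom S P Q" shows "LScmp S P (LSid S P) h = h"
proof -
  obtain X A where P: "P = (X,A)" by (cases P)
  obtain Y B where Q: "Q = (Y,B)" by (cases Q)
  obtain f u where h: "h = (f,u)" by (cases h)
  have a: "f \<in> CH X Y" "u \<in> LH (lT (Fo X) A) B" using assms unfolding P Q h LS_mem by auto
  note T = ty a
  have "lt (Fm (cid X)) (lt (w X) (lid A)) = lt (lt (lid (Fo X)) (w X)) (lid A)"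
    unfolding F_id by (rule ten_assoc[symmetric]) (rule T | simp)+
  hence "lc (lc (lt (cX X) (lid A)) (lt (Fm (cid X)) (lt (w X) (lid A)))) u = lc (lid (lT (Fo X) A)) u"
    using cw_r by simp
  also have "... = u" by (rule l_idl) (rule T | simp)+
  finally show ?thesis unfolding P h LSid_def using c_idl[OF a(1)] by (simp add: LScmp_pair)
qed

lemma LS_assoc:
  assumes "h \<in> LShom S P Q" "k \<in> LShom S Q R" "l \<in> LShom S R V"
  shows "LScmp S P (LScmp S P h k) l = LScmp S P h (LScmp S Q k l)"
proof -
  obtain X A where P: "P = (X,A)" by (cases P)
  obtain Y B where Q: "Q = (Y,B)" by (cases Q)
  obtain Z C where R: "R = (Z,C)" by (cases R)
  obtain W D where V: "V = (W,D)" by (cases V)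
  obtain f u where h: "h = (f,u)" by (cases h)
  obtain g v where k: "k = (g,v)" by (cases k)
  obtain hh x where l: "l = (hh,x)" by (cases l)
  have a: "f \<in> CH X Y" "u \<in> LH (lT (Fo X) A) B" "g \<in> CH Y Z" "v \<in> LH (lT (Fo Y) B) C"
     "hh \<in> CH Z W" "x \<in> LH (lT (Fo Z) C) D"
    using assms unfolding P Q R V h k l LS_mem by auto
  note T = ty a
  define c where "c = cX X"
  define a0 where "a0 = lt c (lid A)"
  define b1 where "b1 = lt (lid (Fo X)) a0"
  define b2 where "b2 = lt c (lid (lT (Fo X) A))"
  define G where "G = Fm (cc f g)"
  define K where "K = lc (lt (Fm f) u) v"
  have cty: "c \<in> LH (Fo X) (lT (Fo X) (Fo X))" unfolding c_def by (rule T | simp)+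
  have a0ty: "a0 \<in> LH (lT (Fo X) A) (lT (Fo X) (lT (Fo X) A))" unfolding a0_def by (rule T cty | simp)+
  have b1ty: "b1 \<in> LH (lT (Fo X) (lT (Fo X) A)) (lT (Fo X) (lT (Fo X) (lT (Fo X) A)))" unfolding b1_def by (rule T a0ty | simp)+
  have b2ty: "b2 \<in> LH (lT (Fo X) (lT (Fo X) A)) (lT (Fo X) (lT (Fo X) (lT (Fo X) A)))" unfolding b2_def by (rule T cty | simp)+
  have Gty: "G \<in> LH (Fo X) (Fo Z)" unfolding G_def by (rule T | simp)+
  have Kty: "K \<in> LH (lT (Fo X) (lT (Fo X) A)) C" unfolding K_def by (rule T | simp)+
  note T = T cty a0ty b1ty b2ty Gty Kty
  have i: "lc a0 b1 = lc a0 b2"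
  proof -
    have "lc a0 b1 = lc (lt c (lid A)) (lt (lt (lid (Fo X)) c) (lid A))"
      unfolding a0_def b1_def by (subst ten_assoc[symmetric]) (rule T | simp)+
    also have "... = lt (lc c (lt (lid (Fo X)) c)) (lc (lid A) (lid A))"
      by (rule interchange[symmetric]) (rule T | simp)+
    also have "... = lt (lc c (lt c (lid (Fo X)))) (lc (lid A) (lid A))"
      unfolding c_def by (simp only: coassoc)
    also have "... = lc (lt c (lid A)) (lt (lt c (lid (Fo X))) (lid A))"
      by (rule interchange) (rule T | simp)+
    also have "lt (lt c (lid (Fo X))) (lid A) = b2"
      unfolding b2_def ten_id[symmetric] by (rule ten_assoc) (rule T | simp)+
    finally show ?thesis unfolding a0_def .
  qed
  have ii: "lt G (lc a0 K) = lc b1 (lt G K)"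
  proof -
    have "lt G (lc a0 K) = lt (lc (lid (Fo X)) G) (lc a0 K)" by (subst l_idl) (rule T | simp)+
    also have "... = lc b1 (lt G K)" unfolding b1_def by (rule interchange) (rule T | simp)+
    finally show ?thesis .
  qed
  have iii: "lc (lt (Fm f) u) (lt (cX Y) (lid B)) = lc b2 (lt (lt (Fm f) (Fm f)) u)"
  proof -
    have "lc (lt (Fm f) u) (lt (cX Y) (lid B)) = lt (lc (Fm f) (cX Y)) (lc u (lid B))"
      by (rule interchange[symmetric]) (rule T | simp)+
    also have "lc (Fm f) (cX Y) = lc c (lt (Fm f) (Fm f))" unfolding c_def by (rule c_nat[OF a(1)])
    also have "lc u (lid B) = lc (lid (lT (Fo X) A)) u" using l_idr[OF a(2)] l_idl[OF a(2)] by simp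
    also have "lt (lc c (lt (Fm f) (Fm f))) (lc (lid (lT (Fo X) A)) u) = lc b2 (lt (lt (Fm f) (Fm f)) u)"
      unfolding b2_def by (rule interchange) (rule T | simp)+
    finally show ?thesis .
  qed
  have iv: "lc (lt (lt (Fm f) (Fm f)) u) (lt (Fm g) v) = lt G K"
  proof -
    have "lt (lt (Fm f) (Fm f)) u = lt (Fm f) (lt (Fm f) u)" by (rule ten_assoc) (rule T | simp)+
    moreover have "lc (lt (Fm f) (lt (Fm f) u)) (lt (Fm g) v) = lt (lc (Fm f) (Fm g)) (lc (lt (Fm f) u) v)"
      by (rule interchange[symmetric]) (rule T | simp)+
    moreover have "lc (Fm f) (Fm g) = G" unfolding G_def by (rule F_cmp[symmetric]) (rule T | simp)+
    ultimately show ?thesis unfolding K_def by simp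
  qed
  have L: "snd (LScmp S P (LScmp S P h k) l) = lc a0 (lc b2 (lc (lt G K) x))"
  proof -
    have "snd (LScmp S P (LScmp S P h k) l) = lc (lc a0 (lt G (lc a0 K))) x"
    proof -
      have "lc (lc a0 (lt (Fm f) u)) v = lc a0 K" unfolding K_def by (rule l_assoc) (rule T | simp)+
      thus ?thesis unfolding P h k l LScmp_pair a0_def c_def G_def by simp
    qed
    also have "... = lc (lc a0 (lc b1 (lt G K))) x" by (simp only: ii)
    also have "... = lc (lc (lc a0 b1) (lt G K)) x" by (subst l_assoc) (rule T | simp)+
    also have "... = lc (lc (lc a0 b2) (lt G K)) x" by (simp only: i)
    also have "... = lc (lc a0 b2) (lc (lt G K) x)" by (rule l_assoc) (rule T | simp)+
    also have "... = lc a0 (lc b2 (lc (lt G K) x))" by (rule l_assoc) (rule T | simp)+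
    finally show ?thesis .
  qed
  have Rr: "snd (LScmp S P h (LScmp S Q k l)) = lc a0 (lc b2 (lc (lt G K) x))"
  proof -
    have "snd (LScmp S P h (LScmp S Q k l)) = lc (lc a0 (lt (Fm f) u)) (lc (lc (lt (cX Y) (lid B)) (lt (Fm g) v)) x)"
      unfolding P Q h k l LScmp_pair a0_def c_def by simp
    also have "... = lc a0 (lc (lt (Fm f) u) (lc (lc (lt (cX Y) (lid B)) (lt (Fm g) v)) x))"
      by (rule l_assoc) (rule T | simp)+
    also have "lc (lc (lt (cX Y) (lid B)) (lt (Fm g) v)) x = lc (lt (cX Y) (lid B)) (lc (lt (Fm g) v) x)"
      by (rule l_assoc) (rule T | simp)+
    also have "lc (lt (Fm f) u) (lc (lt (cX Y) (lid B)) (lc (lt (Fm g) v) x))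
       = lc (lc (lt (Fm f) u) (lt (cX Y) (lid B))) (lc (lt (Fm g) v) x)"
      by (rule l_assoc[symmetric]) (rule T | simp)+
    also have "... = lc (lc b2 (lt (lt (Fm f) (Fm f)) u)) (lc (lt (Fm g) v) x)" by (simp only: iii)
    also have "... = lc b2 (lc (lt (lt (Fm f) (Fm f)) u) (lc (lt (Fm g) v) x))" by (rule l_assoc) (rule T | simp)+
    also have "lc (lt (lt (Fm f) (Fm f)) u) (lc (lt (Fm g) v) x) = lc (lc (lt (lt (Fm f) (Fm f)) u) (lt (Fm g) v)) x"
      by (rule l_assoc[symmetric]) (rule T | simp)+
    also have "... = lc (lt G K) x" by (simp only: iv)
    finally show ?thesis .
  qed
  have F: "fst (LScmp S P (LScmp S P h k) l) = fst (LScmp S P h (LScmp S Q k l))"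
    unfolding P Q h k l LScmp_pair by (simp, rule c_assoc) (rule T | simp)+
  show ?thesis using F L Rr by (simp add: prod_eq_iff)
qed


subsection \<open>T and i2\<close>

lemma Tf_ty: "h \<in> CH X Y \<Longrightarrow> Tf S h \<in> LShom S (X, lam S X) (Y, lam S Y)"
  using ax(9) unfolding T_functor_ax_def by blast
lemma Tf_cmp: "f \<in> CH X Y \<Longrightarrow> g \<in> CH Y Z \<Longrightarrow> Tf S (cc f g) = LScmp S (X, lam S X) (Tf S f) (Tf S g)"
  using ax(9) unfolding T_functor_ax_def by blast

lemma LScmp_snd: "snd (LScmp S P a (x1, v)) = snd (LScmp S P a (x2, v))"
  unfolding LScmp_def by simp

lemma phi_eq: "phi S X Y = (cid (Pr X Y), lTup S (TM S (p1 X Y)) (TM S (p2 X Y)))"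
  unfolding phi_def LStup_def Tf_def by (simp add: tup_pr)

lemma phi_iso: "LSiso S (Pr X Y, lam S (Pr X Y)) (Pr X Y, lBip S (lam S X) (lam S Y)) (phi S X Y)"
  using ax(10) unfolding t1_ax_def by blast

lemma inv_props:
  fixes X Y
  defines "Q \<equiv> (Pr X Y, lBip S (lam S X) (lam S Y))" and "P \<equiv> (Pr X Y, lam S (Pr X Y))"
  shows "LSinv S P Q (phi S X Y) \<in> LShom S Q P \<and> LScmp S Q (LSinv S P Q (phi S X Y)) (phi S X Y) = LSid S Q"
proof -
  have "\<exists>k. k \<in> LShom S Q P \<and> LScmp S P (phi S X Y) k = LSid S P \<and> LScmp S Q k (phi S X Y) = LSid S Q"
    using phi_iso unfolding LSiso_def P_def Q_def by blast
  hence "LSinv S P Q (phi S X Y) \<in> LShom S Q P \<and> LScmp S P (phi S X Y) (LSinv S P Q (phi S X Y)) = LSid S P \<and>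
      LScmp S Q (LSinv S P Q (phi S X Y)) (phi S X Y) = LSid S Q"
    unfolding LSinv_def by (rule someI_ex)
  thus ?thesis by blast
qed

lemma phi_ty: "phi S X Y \<in> LShom S (Pr X Y, lam S (Pr X Y)) (Pr X Y, lBip S (lam S X) (lam S Y))"
  using phi_iso unfolding LSiso_def by blast

definition "pj2 X Y = (p2 X Y, lt (w (Pr X Y)) (lBp2 S (lam S X) (lam S Y)))"

lemma pj2_ty: "pj2 X Y \<in> LShom S (Pr X Y, lBip S (lam S X) (lam S Y)) (Y, lam S Y)"
  unfolding pj2_def LS_mem by (rule conjI, (rule ty | simp)+)+

lemma Tp2: "LScmp S (Pr X Y, lam S (Pr X Y)) (phi S X Y) (pj2 X Y) = Tf S (p2 X Y)"
proof -
  note T = ty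
  have "lc (lc (lt (cX (Pr X Y)) (lid (lam S (Pr X Y)))) (lt (Fm (cid (Pr X Y))) (lTup S (TM S (p1 X Y)) (TM S (p2 X Y)))))
          (lt (w (Pr X Y)) (lBp2 S (lam S X) (lam S Y))) = lc (lTup S (TM S (p1 X Y)) (TM S (p2 X Y))) (lBp2 S (lam S X) (lam S Y))"
    by (rule G1) (rule T | simp)+
  also have "... = TM S (p2 X Y)" by (rule lTup_p2) (rule T | simp)+
  finally show ?thesis unfolding phi_eq pj2_def LScmp_pair Tf_def
    using c_idl[OF p2_ty[OF refl refl]] by simp
qed

lemma iota2_ty: "iota2 S (Pr X Y) (lam S X) (lam S Y) \<in> LShom S (Pr X Y, lam S Y) (Pr X Y, lBip S (lam S X) (lam S Y))"
  unfolding iota2_def LS_mem by (rule conjI, (rule ty | simp)+)+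

lemma i2_ty: "i2 S X Y \<in> LShom S (Pr X Y, lam S Y) (Pr X Y, lam S (Pr X Y))"
  unfolding i2_def by (rule LScmp_ty[OF iota2_ty], rule inv_props[THEN conjunct1])

lemma i2_p2: "LScmp S (Pr X Y, lam S Y) (i2 S X Y) (Tf S (p2 X Y)) = (p2 X Y, lt (w (Pr X Y)) (lid (lam S Y)))"
proof -
  note T = ty
  define R where "R = (Pr X Y, lam S Y)"
  define Q where "Q = (Pr X Y, lBip S (lam S X) (lam S Y))"
  define P where "P = (Pr X Y, lam S (Pr X Y))"
  define iv where "iv = LSinv S P Q (phi S X Y)"
  define io where "io = iota2 S (Pr X Y) (lam S X) (lam S Y)"
  have ivp: "iv \<in> LShom S Q P" "LScmp S Q iv (phi S X Y) = LSid S Q"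
    using inv_props unfolding iv_def P_def Q_def by auto
  have ioty: "io \<in> LShom S R Q" unfolding io_def R_def Q_def by (rule iota2_ty)
  have Tty: "Tf S (p2 X Y) \<in> LShom S P (Y, lam S Y)" unfolding P_def by (rule Tf_ty, rule T | simp)+
  have pty: "pj2 X Y \<in> LShom S Q (Y, lam S Y)" unfolding Q_def by (rule pj2_ty)
  have phty: "phi S X Y \<in> LShom S P Q" unfolding P_def Q_def by (rule phi_ty)
  have "LScmp S R (i2 S X Y) (Tf S (p2 X Y)) = LScmp S R (LScmp S R io iv) (Tf S (p2 X Y))"
    unfolding i2_def R_def io_def iv_def P_def Q_def ..
  also have "... = LScmp S R io (LScmp S Q iv (Tf S (p2 X Y)))" by (rule LS_assoc[OF ioty ivp(1) Tty])
  also have "LScmp S Q iv (Tf S (p2 X Y)) = LScmp S Q iv (LScmp S P (phi S X Y) (pj2 X Y))"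
    using Tp2 unfolding P_def by simp
  also have "... = LScmp S Q (LScmp S Q iv (phi S X Y)) (pj2 X Y)" by (rule LS_assoc[symmetric, OF ivp(1) phty pty])
  also have "... = pj2 X Y" unfolding ivp(2) by (rule LS_idl[OF pty])
  also have "LScmp S R io (pj2 X Y) = (p2 X Y, lc (lt (w (Pr X Y)) (inj2 S (lam S X) (lam S Y))) (lBp2 S (lam S X) (lam S Y)))"
  proof -
    have "lc (lc (lt (cX (Pr X Y)) (lid (lam S Y))) (lt (Fm (cid (Pr X Y))) (lt (w (Pr X Y)) (inj2 S (lam S X) (lam S Y)))))
       (lt (w (Pr X Y)) (lBp2 S (lam S X) (lam S Y))) = lc (lt (w (Pr X Y)) (inj2 S (lam S X) (lam S Y))) (lBp2 S (lam S X) (lam S Y))"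
      by (rule G1) (rule T | simp)+
    thus ?thesis unfolding R_def io_def iota2_def pj2_def LScmp_pair using c_idl[OF p2_ty[OF refl refl]] by simp
  qed
  also have "lc (lt (w (Pr X Y)) (inj2 S (lam S X) (lam S Y))) (lBp2 S (lam S X) (lam S Y)) = lt (w (Pr X Y)) (lid (lam S Y))"
  proof -
    have "lt (lc (w (Pr X Y)) (lid Iu)) (lc (inj2 S (lam S X) (lam S Y)) (lBp2 S (lam S X) (lam S Y)))
       = lc (lt (w (Pr X Y)) (inj2 S (lam S X) (lam S Y))) (lt (lid Iu) (lBp2 S (lam S X) (lam S Y)))"
      by (rule interchange) (rule T | simp)+
    moreover have "lt (lid Iu) (lBp2 S (lam S X) (lam S Y)) = lBp2 S (lam S X) (lam S Y)" by (rule ten_unitl) (rule T | simp)+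
    moreover have "lc (w (Pr X Y)) (lid Iu) = w (Pr X Y)" by (rule l_idr) (rule T | simp)+
    ultimately show ?thesis by (simp add: inj2_p2)
  qed
  finally show ?thesis unfolding R_def .
qed

lemma D2_snd: "snd (D2 S X Y h) = snd (LScmp S (Pr X Y, lam S Y) (i2 S X Y) (Tf S h))"
  unfolding D2_def Dm_def Tf_def by (rule LScmp_snd)

lemma D2chain: assumes "g \<in> CH Y V"
  shows "snd (D2 S X Y (cc (p2 X Y) g)) = lc (lt (Fm (p2 X Y)) (lid (lam S Y))) (TM S g)"
proof -
  note T = ty assms
  define R where "R = (Pr X Y, lam S Y)"
  define P where "P = (Pr X Y, lam S (Pr X Y))"
  have "snd (D2 S X Y (cc (p2 X Y) g)) = snd (LScmp S R (i2 S X Y) (Tf S (cc (p2 X Y) g)))"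
    unfolding R_def by (rule D2_snd)
  also have "Tf S (cc (p2 X Y) g) = LScmp S P (Tf S (p2 X Y)) (Tf S g)"
    unfolding P_def by (rule Tf_cmp) (rule T | simp)+
  also have "LScmp S R (i2 S X Y) (LScmp S P (Tf S (p2 X Y)) (Tf S g)) = LScmp S R (LScmp S R (i2 S X Y) (Tf S (p2 X Y))) (Tf S g)"
    by (rule LS_assoc[symmetric]) (unfold R_def P_def, rule i2_ty, (rule Tf_ty, (rule T | simp)+)+)
  also have "LScmp S R (i2 S X Y) (Tf S (p2 X Y)) = (p2 X Y, lt (w (Pr X Y)) (lid (lam S Y)))"
    unfolding R_def by (rule i2_p2)
  also have "snd (LScmp S R (p2 X Y, lt (w (Pr X Y)) (lid (lam S Y))) (Tf S g))
     = lc (lc (lt (cX (Pr X Y)) (lid (lam S Y))) (lt (Fm (p2 X Y)) (lt (w (Pr X Y)) (lid (lam S Y))))) (TM S g)"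
    unfolding R_def Tf_def LScmp_pair by simp
  also have "lt (Fm (p2 X Y)) (lt (w (Pr X Y)) (lid (lam S Y))) = lt (lt (Fm (p2 X Y)) (w (Pr X Y))) (lid (lam S Y))"
    by (rule ten_assoc[symmetric]) (rule T | simp)+
  also have "lc (lt (cX (Pr X Y)) (lid (lam S Y))) (lt (lt (Fm (p2 X Y)) (w (Pr X Y))) (lid (lam S Y)))
     = lt (lc (cX (Pr X Y)) (lt (Fm (p2 X Y)) (w (Pr X Y)))) (lc (lid (lam S Y)) (lid (lam S Y)))"
    by (rule interchange[symmetric]) (rule T | simp)+
  also have "lc (cX (Pr X Y)) (lt (Fm (p2 X Y)) (w (Pr X Y))) = Fm (p2 X Y)" by (rule G2) (rule T | simp)+
  also have "lc (lid (lam S Y)) (lid (lam S Y)) = lid (lam S Y)" by (rule l_idl) (rule T | simp)+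
  finally show ?thesis .
qed


lemma brace_ty: assumes "f \<in> CH X Y" "u \<in> LH (lT (Fo X) A) B"
  shows "brace S X A f u \<in> CH (Pr X (Uo A)) (Pr Y (Uo B))"
  unfolding brace_def by (rule ty assms | simp)+

lemma D2lin: assumes "f \<in> CH X Y" "u \<in> LH (lT (Fo X) A) B"
  shows "snd (D2 S X (Uo A) (cc (brace S X A f u) (p2 Y (Uo B)))) = lc (lt (Fm (p1 X (Uo A))) (lid A)) u"
proof -
  note T = ty assms
  define br where "br = brace S X A f u"
  define R where "R = (Pr X (Uo A), A)"
  define P where "P = (Pr X (Uo A), lam S (Pr X (Uo A)))"
  define P' where "P' = (Pr Y (Uo B), lam S (Pr Y (Uo B)))"
  have brty: "br \<in> CH (Pr X (Uo A)) (Pr Y (Uo B))" unfolding br_def by (rule brace_ty[OF assms])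
  note T = T brty
  have i2A: "i2 S X (Uo A) \<in> LShom S R P" using i2_ty[of X "Uo A"] unfolding R_def P_def by simp
  have i2B: "i2 S Y (Uo B) \<in> LShom S (Pr Y (Uo B), B) P'" using i2_ty[of Y "Uo B"] unfolding P'_def by simp
  have Tbr: "Tf S br \<in> LShom S P P'" unfolding P_def P'_def by (rule Tf_ty[OF brty])
  have Tp: "Tf S (p2 Y (Uo B)) \<in> LShom S P' (Uo B, B)"
    using Tf_ty[OF p2_ty[OF refl refl], of Y "Uo B"] unfolding P'_def by simp
  have Wty: "Wmap S X A f u \<in> LShom S R (Pr Y (Uo B), B)"
    unfolding Wmap_def R_def LS_mem br_def[symmetric] by (rule conjI, (rule T | simp)+)+
  have t3: "LScmp S R (Wmap S X A f u) (i2 S Y (Uo B)) = LScmp S R (i2 S X (Uo A)) (Tf S br)"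
    using ax(12) assms unfolding t3_ax_def R_def br_def LS_mem by blast
  have "snd (D2 S X (Uo A) (cc br (p2 Y (Uo B)))) = snd (LScmp S R (i2 S X (Uo A)) (Tf S (cc br (p2 Y (Uo B)))))"
    using D2_snd[of X "Uo A" "cc br (p2 Y (Uo B))"] unfolding R_def by simp
  also have "Tf S (cc br (p2 Y (Uo B))) = LScmp S P (Tf S br) (Tf S (p2 Y (Uo B)))"
    unfolding P_def by (rule Tf_cmp) (rule T | simp)+
  also have "LScmp S R (i2 S X (Uo A)) (LScmp S P (Tf S br) (Tf S (p2 Y (Uo B))))
     = LScmp S R (LScmp S R (i2 S X (Uo A)) (Tf S br)) (Tf S (p2 Y (Uo B)))"
    by (rule LS_assoc[symmetric, OF i2A Tbr Tp])
  also have "... = LScmp S R (LScmp S R (Wmap S X A f u) (i2 S Y (Uo B))) (Tf S (p2 Y (Uo B)))"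
    unfolding t3 ..
  also have "... = LScmp S R (Wmap S X A f u) (LScmp S (Pr Y (Uo B), B) (i2 S Y (Uo B)) (Tf S (p2 Y (Uo B))))"
    by (rule LS_assoc[OF Wty i2B Tp])
  also have "LScmp S (Pr Y (Uo B), B) (i2 S Y (Uo B)) (Tf S (p2 Y (Uo B))) = (p2 Y (Uo B), lt (w (Pr Y (Uo B))) (lid B))"
    using i2_p2[of Y "Uo B"] by simp
  also have "snd (LScmp S R (Wmap S X A f u) (p2 Y (Uo B), lt (w (Pr Y (Uo B))) (lid B)))
     = lc (lc (lt (cX (Pr X (Uo A))) (lid A)) (lt (Fm br) (lc (lt (Fm (p1 X (Uo A))) (lid A)) u))) (lt (w (Pr Y (Uo B))) (lid B))"
    unfolding R_def Wmap_def LScmp_pair br_def by simp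
  also have "... = lc (lc (lt (Fm (p1 X (Uo A))) (lid A)) u) (lid B)" by (rule G1) (rule T | simp)+
  also have "... = lc (lt (Fm (p1 X (Uo A))) (lid A)) u" by (rule l_idr) (rule T | simp)+
  finally show ?thesis unfolding br_def .
qed

lemma lin_C: assumes "v \<in> LH B C"
  shows "cc (cc (prodC S (cTrm S) (Uo B) (eta (cTrm S)) (cid (Uo B))) (nU S (Fo (cTrm S)) B)) (Um (lt (mF1i S) v))
       = cc (p2 (cTrm S) (Uo B)) (Um v)"
proof -
  note T = ty assms
  define PE where "PE = prodC S (cTrm S) (Uo B) (eta (cTrm S)) (cid (Uo B))"
  define P2 where "P2 = prodC S (Uo (Fo (cTrm S))) (Uo B) (Um (mF1i S)) (Um v)"
  have PEty: "PE \<in> CH (Pr (cTrm S) (Uo B)) (Pr (Uo (Fo (cTrm S))) (Uo B))" unfolding PE_def by (rule T | simp)+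
  have P2ty: "P2 \<in> CH (Pr (Uo (Fo (cTrm S))) (Uo B)) (Pr (Uo Iu) (Uo C))" unfolding P2_def by (rule T | simp)+
  note T = T PEty P2ty
  have e1: "cc (eta (cTrm S)) (Um (mF1i S)) = nU1 S"
  proof -
    have "cc (eta (cTrm S)) (Um (mF1i S)) = cc (cc (nU1 S) (Um (mF1 S))) (Um (mF1i S))" using madj_1 by simp
    also have "... = cc (nU1 S) (cc (Um (mF1 S)) (Um (mF1i S)))" by (rule c_assoc) (rule T | simp)+
    also have "cc (Um (mF1 S)) (Um (mF1i S)) = Um (lc (mF1 S) (mF1i S))" by (rule U_cmp[symmetric]) (rule T | simp)+
    also have "... = cid (Uo Iu)" by (simp add: m1_m1i U_id)
    also have "cc (nU1 S) (cid (Uo Iu)) = nU1 S" by (rule c_idr) (rule T | simp)+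
    finally show ?thesis .
  qed
  have "cc (cc PE (nU S (Fo (cTrm S)) B)) (Um (lt (mF1i S) v)) = cc PE (cc (nU S (Fo (cTrm S)) B) (Um (lt (mF1i S) v)))"
    by (rule c_assoc) (rule T | simp)+
  also have "cc (nU S (Fo (cTrm S)) B) (Um (lt (mF1i S) v)) = cc P2 (nU S Iu C)"
    unfolding P2_def by (rule nU_nat[symmetric]) (rule T | simp)+
  also have "cc PE (cc P2 (nU S Iu C)) = cc (cc PE P2) (nU S Iu C)" by (rule c_assoc[symmetric]) (rule T | simp)+
  also have "cc PE P2 = prodC S (cTrm S) (Uo B) (cc (eta (cTrm S)) (Um (mF1i S))) (cc (cid (Uo B)) (Um v))"
    unfolding PE_def P2_def by (rule prodC_cmp) (rule T | simp)+
  also have "... = prodC S (cTrm S) (Uo B) (cc (cid (cTrm S)) (nU1 S)) (cc (Um v) (cid (Uo C)))"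
    unfolding e1 using c_idl[of "Um v" "Uo B" "Uo C"] c_idr[of "Um v" "Uo B" "Uo C"] c_idl[of "nU1 S" "cTrm S" "Uo Iu"] U_ty[OF assms refl refl]
      nU1_ty[OF refl refl] by simp
  also have "... = cc (prodC S (cTrm S) (Uo B) (cid (cTrm S)) (Um v)) (prodC S (cTrm S) (Uo C) (nU1 S) (cid (Uo C)))"
    by (rule prodC_cmp[symmetric]) (rule T | simp)+
  also have "cc (cc (prodC S (cTrm S) (Uo B) (cid (cTrm S)) (Um v)) (prodC S (cTrm S) (Uo C) (nU1 S) (cid (Uo C)))) (nU S Iu C)
     = cc (prodC S (cTrm S) (Uo B) (cid (cTrm S)) (Um v)) (cc (prodC S (cTrm S) (Uo C) (nU1 S) (cid (Uo C))) (nU S Iu C))"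
    by (rule c_assoc) (rule T | simp)+
  also have "cc (prodC S (cTrm S) (Uo C) (nU1 S) (cid (Uo C))) (nU S Iu C) = p2 (cTrm S) (Uo C)"
    by (rule nU_unitl)
  also have "cc (prodC S (cTrm S) (Uo B) (cid (cTrm S)) (Um v)) (p2 (cTrm S) (Uo C)) = cc (p2 (cTrm S) (Uo B)) (Um v)"
    by (rule prodC_p2) (rule T | simp)+
  finally show ?thesis unfolding PE_def .
qed


lemma linear: assumes "v \<in> LH B C" shows "TM S (Um v) = lt (w (Uo B)) v"
proof -
  note T = ty assms
  define u where "u = lt (mF1i S) v"
  have uty: "u \<in> LH (lT (Fo (cTrm S)) B) C" unfolding u_def by (rule T | simp)+
  note T = T uty
  have E1: "snd (D2 S (cTrm S) (Uo B) (cc (brace S (cTrm S) B (cid (cTrm S)) u) (p2 (cTrm S) (Uo C))))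
      = lc (lt (Fm (p1 (cTrm S) (Uo B))) (lid B)) u"
    by (rule D2lin[OF c_id_ty[OF refl refl] uty])
  have bp: "cc (brace S (cTrm S) B (cid (cTrm S)) u) (p2 (cTrm S) (Uo C)) = cc (p2 (cTrm S) (Uo B)) (Um v)"
  proof -
    have "cc (brace S (cTrm S) B (cid (cTrm S)) u) (p2 (cTrm S) (Uo C))
       = cc (cc (prodC S (cTrm S) (Uo B) (eta (cTrm S)) (cid (Uo B))) (nU S (Fo (cTrm S)) B)) (Um u)"
      unfolding brace_def by (rule tup_p2) (rule T | simp)+
    thus ?thesis using lin_C[OF assms] unfolding u_def by simp
  qed
  have E2: "snd (D2 S (cTrm S) (Uo B) (cc (p2 (cTrm S) (Uo B)) (Um v))) = lc (lt (Fm (p2 (cTrm S) (Uo B))) (lid B)) (TM S (Um v))"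
    using D2chain[of "Um v" "Uo B" "Uo C" "cTrm S"] U_ty[OF assms refl refl] by simp
  have E: "lc (lt (Fm (p2 (cTrm S) (Uo B))) (lid B)) (TM S (Um v)) = lc (lt (Fm (p1 (cTrm S) (Uo B))) (lid B)) u"
    using E1 E2 bp by simp
  define q where "q = lc (lt (mF1 S) (lid (Fo (Uo B)))) (mF S (cTrm S) (Uo B))"
  have qty: "q \<in> LH (Fo (Uo B)) (Fo (Pr (cTrm S) (Uo B)))" unfolding q_def by (rule T | simp)+
  note T = T qty
  have hq2: "lc q (Fm (p2 (cTrm S) (Uo B))) = lid (Fo (Uo B))" unfolding q_def by (rule m_unitl)
  have hq1: "lc q (Fm (p1 (cTrm S) (Uo B))) = lt (mF1 S) (w (Uo B))"
  proof -
    have "lc q (Fm (p1 (cTrm S) (Uo B))) = lc (lt (mF1 S) (lid (Fo (Uo B)))) (lc (mF S (cTrm S) (Uo B)) (Fm (p1 (cTrm S) (Uo B))))"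
      unfolding q_def by (rule l_assoc) (rule T | simp)+
    also have "... = lc (lt (mF1 S) (lid (Fo (Uo B)))) (lt (lid (Fo (cTrm S))) (w (Uo B)))" by (simp only: m_p1)
    also have "... = lt (lc (mF1 S) (lid (Fo (cTrm S)))) (lc (lid (Fo (Uo B))) (w (Uo B)))"
      by (rule interchange[symmetric]) (rule T | simp)+
    also have "... = lt (mF1 S) (w (Uo B))" by (subst l_idr, (rule T | simp)+, subst l_idl, (rule T | simp)+)
    finally show ?thesis .
  qed
  have hw: "lc (lt (mF1 S) (w (Uo B))) (mF1i S) = w (Uo B)"
  proof -
    have "lt (mF1 S) (w (Uo B)) = lc (lt (lid Iu) (w (Uo B))) (lt (mF1 S) (lid Iu))" by (rule ten_split2) (rule T | simp)+
    also have "... = lc (w (Uo B)) (mF1 S)" by (subst ten_unitl, (rule T | simp)+, subst ten_unitr, (rule T | simp)+)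
    finally have "lc (lt (mF1 S) (w (Uo B))) (mF1i S) = lc (lc (w (Uo B)) (mF1 S)) (mF1i S)" by simp
    also have "... = lc (w (Uo B)) (lc (mF1 S) (mF1i S))" by (rule l_assoc) (rule T | simp)+
    also have "... = w (Uo B)" by (simp only: m1_m1i, rule l_idr) (rule T | simp)+
    finally show ?thesis .
  qed
  have "TM S (Um v) = lc (lid (lT (Fo (Uo B)) B)) (TM S (Um v))" by (rule l_idl[symmetric]) (rule T | simp)+
  also have "lid (lT (Fo (Uo B)) B) = lt (lc q (Fm (p2 (cTrm S) (Uo B)))) (lc (lid B) (lid B))"
    using hq2 l_idl[OF l_id_ty[OF refl refl]] ten_id by simp
  also have "... = lc (lt q (lid B)) (lt (Fm (p2 (cTrm S) (Uo B))) (lid B))" by (rule interchange) (rule T | simp)+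
  also have "lc (lc (lt q (lid B)) (lt (Fm (p2 (cTrm S) (Uo B))) (lid B))) (TM S (Um v))
     = lc (lt q (lid B)) (lc (lt (Fm (p2 (cTrm S) (Uo B))) (lid B)) (TM S (Um v)))" by (rule l_assoc) (rule T | simp)+
  also have "... = lc (lt q (lid B)) (lc (lt (Fm (p1 (cTrm S) (Uo B))) (lid B)) u)" by (simp only: E)
  also have "... = lc (lc (lt q (lid B)) (lt (Fm (p1 (cTrm S) (Uo B))) (lid B))) u" by (rule l_assoc[symmetric]) (rule T | simp)+
  also have "lc (lt q (lid B)) (lt (Fm (p1 (cTrm S) (Uo B))) (lid B)) = lt (lc q (Fm (p1 (cTrm S) (Uo B)))) (lc (lid B) (lid B))"
    by (rule interchange[symmetric]) (rule T | simp)+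
  also have "... = lt (lt (mF1 S) (w (Uo B))) (lid B)" using hq1 l_idl[OF l_id_ty[OF refl refl]] by simp
  also have "lc (lt (lt (mF1 S) (w (Uo B))) (lid B)) u = lt (lc (lt (mF1 S) (w (Uo B))) (mF1i S)) (lc (lid B) v)"
    unfolding u_def by (rule interchange[symmetric]) (rule T | simp)+
  also have "... = lt (w (Uo B)) v" using hw l_idl[OF assms] by simp
  finally show ?thesis .
qed

lemma chainL:
  "lc (TM S (eta (Uo A))) (Fm (eta (Uo A)))
   = lc (lc (lt (cX (Uo A)) (lid A)) (lt (Fm (eta (Uo A))) (TM S (eta (Uo A))))) (TM S (eta (Uo (Fo (Uo A)))))"
proof -
  note T = ty
  define e where "e = eta (Uo A)"
  have ety: "e \<in> CH (Uo A) (Uo (Fo (Uo A)))" unfolding e_def by (rule T | simp)+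
  note T = T ety
  have n: "cc e (eta (Uo (Fo (Uo A)))) = cc e (Um (Fm e))" unfolding e_def by (rule eta_nat) (rule T[unfolded e_def] | simp)+
  have "TM S (cc e (eta (Uo (Fo (Uo A))))) = lc (lc (lt (cX (Uo A)) (lid (lam S (Uo A)))) (lt (Fm e) (TM S e))) (TM S (eta (Uo (Fo (Uo A)))))"
    by (rule TM_cmp) (rule T | simp)+
  hence r: "TM S (cc e (eta (Uo (Fo (Uo A))))) = lc (lc (lt (cX (Uo A)) (lid A)) (lt (Fm e) (TM S e))) (TM S (eta (Uo (Fo (Uo A)))))"
    by simp
  have "TM S (cc e (Um (Fm e))) = lc (lc (lt (cX (Uo A)) (lid (lam S (Uo A)))) (lt (Fm e) (TM S e))) (TM S (Um (Fm e)))"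
    by (rule TM_cmp) (rule T | simp)+
  also have "TM S (Um (Fm e)) = lt (w (Uo (Fo (Uo A)))) (Fm e)" by (rule linear) (rule T | simp)+
  also have "lc (lc (lt (cX (Uo A)) (lid (lam S (Uo A)))) (lt (Fm e) (TM S e))) (lt (w (Uo (Fo (Uo A)))) (Fm e))
     = lc (TM S e) (Fm e)" using G1[of e "Uo A" "Uo (Fo (Uo A))" "TM S e" A "Fo (Uo A)" "Fm e"] 
       TM_ty[OF ety refl refl] F_ty[OF ety refl refl] ety by simp
  finally have l: "TM S (cc e (Um (Fm e))) = lc (TM S e) (Fm e)" .
  show ?thesis using n l r unfolding e_def by simp
qed


subsection \<open>Fibre computations\<close>

lemma FibCmp: assumes "u \<in> LH A B" "v \<in> LH B C"
  shows "LScmp S (X, A) (cid X, lt (w X) u) (cid X, lt (w X) v) = (cid X, lt (w X) (lc u v))"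
proof -
  note T = ty assms
  have "lc (lc (lt (cX X) (lid A)) (lt (Fm (cid X)) (lt (w X) u))) (lt (w X) v) = lc (lt (w X) u) v"
    by (rule G1) (rule T | simp)+
  also have "... = lt (w X) (lc u v)"
  proof -
    have "lt (lc (w X) (lid Iu)) (lc u v) = lc (lt (w X) u) (lt (lid Iu) v)" by (rule interchange) (rule T | simp)+
    thus ?thesis using ten_unitl[OF assms(2)] l_idr[OF w_ty[OF refl refl]] by simp
  qed
  finally show ?thesis unfolding LScmp_pair using c_idl[OF c_id_ty[OF refl refl]] by simp
qed

lemma FibTen: assumes "u \<in> LH A A'" "v \<in> LH B B'"
  shows "tenX S X A B (cid X, lt (w X) u) (cid X, lt (w X) v) = (cid X, lt (w X) (lt u v))"
proof -
  note T = ty assms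
  have s: "lc (lSym S (Fo X) A) (lt u (w X)) = lt (w X) u"
  proof -
    have "lc (lt (w X) u) (lSym S Iu A') = lc (lSym S (Fo X) A) (lt u (w X))" by (rule sym_nat) (rule T | simp)+
    moreover have "lt (w X) u \<in> LH (lT (Fo X) A) A'" by (rule T | simp)+
    ultimately show ?thesis using sym_unitl l_idr by metis
  qed
  have "lt (lt (w X) u) (lt (w X) v) = lt (w X) (lt u (lt (w X) v))" by (rule ten_assoc) (rule T | simp)+
  also have "lt u (lt (w X) v) = lt (lt u (w X)) v" by (rule ten_assoc[symmetric]) (rule T | simp)+
  finally have a1: "lt (lt (w X) u) (lt (w X) v) = lt (w X) (lt (lt u (w X)) v)" .
  have a2: "lt (lt (lid (Fo X)) (lSym S (Fo X) A)) (lid B) = lt (lid (Fo X)) (lt (lSym S (Fo X) A) (lid B))"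
    by (rule ten_assoc) (rule T | simp)+
  have a3: "lc (lt (lid (Fo X)) (lt (lSym S (Fo X) A) (lid B))) (lt (w X) (lt (lt u (w X)) v))
      = lt (lc (lid (Fo X)) (w X)) (lc (lt (lSym S (Fo X) A) (lid B)) (lt (lt u (w X)) v))"
    by (rule interchange[symmetric]) (rule T | simp)+
  have a4: "lc (lt (lSym S (Fo X) A) (lid B)) (lt (lt u (w X)) v) = lt (lc (lSym S (Fo X) A) (lt u (w X))) (lc (lid B) v)"
    by (rule interchange[symmetric]) (rule T | simp)+
  have a5: "lt (lt (w X) u) v = lt (w X) (lt u v)" by (rule ten_assoc) (rule T | simp)+
  have a6: "lt (w X) (lt (w X) (lt u v)) = lt (lt (w X) (w X)) (lt u v)" by (rule ten_assoc[symmetric]) (rule T | simp)+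
  have a7: "lc (lt (cX X) (lid (lT A B))) (lt (lt (w X) (w X)) (lt u v)) = lt (lc (cX X) (lt (w X) (w X))) (lc (lid (lT A B)) (lt u v))"
    by (rule interchange[symmetric]) (rule T | simp)+
  have a8: "lc (cX X) (lt (w X) (w X)) = w X"
  proof -
    have "lt (w X) (w X) = lc (lt (lid (Fo X)) (w X)) (lt (w X) (lid Iu))" by (rule ten_split2) (rule T | simp)+
    also have "... = lc (lt (lid (Fo X)) (w X)) (w X)" by (subst ten_unitr) (rule T | simp)+
    finally have "lc (cX X) (lt (w X) (w X)) = lc (cX X) (lc (lt (lid (Fo X)) (w X)) (w X))" by simp
    also have "... = lc (lc (cX X) (lt (lid (Fo X)) (w X))) (w X)" by (rule l_assoc[symmetric]) (rule T | simp)+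
    also have "... = w X" by (simp only: counit_r, rule l_idl) (rule T | simp)+
    finally show ?thesis .
  qed
  have a9: "lc (lid (Fo X)) (w X) = w X" by (rule l_idl) (rule T | simp)+
  have a10: "lc (lid B) v = v" by (rule l_idl) (rule T | simp)+
  have a11: "lc (lid (lT A B)) (lt u v) = lt u v" by (rule l_idl) (rule T | simp)+
  have "snd (tenX S X A B (cid X, lt (w X) u) (cid X, lt (w X) v))
    = lc (lc (lt (cX X) (lid (lT A B))) (lt (lt (lid (Fo X)) (lSym S (Fo X) A)) (lid B))) (lt (lt (w X) u) (lt (w X) v))"
    unfolding tenX_def by simp
  also have "... = lc (lt (cX X) (lid (lT A B))) (lc (lt (lid (Fo X)) (lt (lSym S (Fo X) A) (lid B))) (lt (w X) (lt (lt u (w X)) v)))"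
    unfolding a1 a2 by (rule l_assoc) (rule T | simp)+
  also have "... = lc (lt (cX X) (lid (lT A B))) (lt (lt (w X) (w X)) (lt u v))"
    unfolding a3 a4 s a9 a10 a5 a6 ..
  also have "... = lt (w X) (lt u v)" unfolding a7 a8 a11 ..
  finally show ?thesis unfolding tenX_def by simp
qed

lemma derX_eq: "derX S X A = (cid X, lt (w X) (TM S (eta (Uo A))))"
proof -
  note T = ty
  define dd where "dd = TM S (eta (Uo A))"
  let ?FA = "Fo (Uo A)"
  have ddty: "dd \<in> LH (lT ?FA A) ?FA" unfolding dd_def by (rule T | simp)+
  note T = T ddty
  have sd: "snd (scrD S X A) = lc (lt (Fm (p2 X (Uo A))) (lid A)) dd"
    unfolding scrD_def dd_def using D2chain[of "eta (Uo A)" "Uo A" "Uo (Fo (Uo A))" X] eta_ty[OF refl refl] by simp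
  define G where "G = lt (w X) dd"
  have Gty: "G \<in> LH (lT (Fo X) (lT ?FA A)) ?FA" unfolding G_def by (rule T | simp)+
  note T = T Gty
  have inner: "lc (lt (mF S X (Uo A)) (lid A)) (snd (scrD S X A)) = G"
  proof -
    have "lc (lt (mF S X (Uo A)) (lid A)) (lc (lt (Fm (p2 X (Uo A))) (lid A)) dd)
       = lc (lc (lt (mF S X (Uo A)) (lid A)) (lt (Fm (p2 X (Uo A))) (lid A))) dd" by (rule l_assoc[symmetric]) (rule T | simp)+
    also have "lc (lt (mF S X (Uo A)) (lid A)) (lt (Fm (p2 X (Uo A))) (lid A)) = lt (lc (mF S X (Uo A)) (Fm (p2 X (Uo A)))) (lc (lid A) (lid A))"
      by (rule interchange[symmetric]) (rule T | simp)+
    also have "... = lt (lt (w X) (lid ?FA)) (lid A)" unfolding m_p2 using l_idl[OF l_id_ty[OF refl refl]] by simp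
    also have "... = lt (w X) (lt (lid ?FA) (lid A))" by (rule ten_assoc) (rule T | simp)+
    also have "lc (lt (w X) (lt (lid ?FA) (lid A))) dd = G" unfolding G_def ten_id by (rule absorb_l[symmetric]) (rule T | simp)+
    finally show ?thesis unfolding sd .
  qed
  define a1 where "a1 = lt (lt (lid (Fo X)) (cX (Uo A))) (lid A)"
  define a2 where "a2 = lt (lSym S (Fo X) ?FA) (lid (lT ?FA A))"
  define big where "big = lid (lT (Fo X) (lT ?FA A))"
  have a1ty: "a1 \<in> LH (lT (Fo X) (lT ?FA A)) (lT (Fo X) (lT ?FA (lT ?FA A)))" unfolding a1_def by (rule T | simp)+
  have a2ty: "a2 \<in> LH (lT (Fo X) (lT ?FA (lT ?FA A))) (lT ?FA (lT (Fo X) (lT ?FA A)))" unfolding a2_def by (rule T | simp)+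
  note T = T a1ty a2ty
  have sig: "snd (SigmaX S X A A (scrD S X A)) = lc (lc a1 a2) (lt (lid ?FA) G)"
    unfolding SigmaX_def a1_def a2_def bangL_def inner by simp
  have b1: "lc (lt (lid ?FA) G) (lt (w (Uo A)) (lid ?FA)) = lc (lt (w (Uo A)) big) G"
  proof -
    have "lc (lt (lid ?FA) G) (lt (w (Uo A)) (lid ?FA)) = lt (lc (lid ?FA) (w (Uo A))) (lc G (lid ?FA))"
      by (rule interchange[symmetric]) (rule T | simp)+
    also have "... = lt (w (Uo A)) G" using l_idl[OF w_ty[OF refl refl]] l_idr[OF Gty] by simp
    also have "... = lc (lt (w (Uo A)) big) G" unfolding big_def by (rule absorb_l) (rule T | simp)+
    finally show ?thesis .
  qed
  have b2: "lc a2 (lt (w (Uo A)) big) = lt (lt (lid (Fo X)) (w (Uo A))) (lid (lT ?FA A))"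
  proof -
    have "lt (w (Uo A)) big = lt (w (Uo A)) (lt (lid (Fo X)) (lid (lT ?FA A)))" unfolding big_def ten_id ..
    also have "... = lt (lt (w (Uo A)) (lid (Fo X))) (lid (lT ?FA A))" by (rule ten_assoc[symmetric]) (rule T | simp)+
    finally have "lc a2 (lt (w (Uo A)) big) = lc a2 (lt (lt (w (Uo A)) (lid (Fo X))) (lid (lT ?FA A)))" by simp
    also have "... = lt (lc (lSym S (Fo X) ?FA) (lt (w (Uo A)) (lid (Fo X)))) (lc (lid (lT ?FA A)) (lid (lT ?FA A)))"
      unfolding a2_def by (rule interchange[symmetric]) (rule T | simp)+
    also have "lc (lSym S (Fo X) ?FA) (lt (w (Uo A)) (lid (Fo X))) = lc (lt (lid (Fo X)) (w (Uo A))) (lSym S (Fo X) Iu)"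
      by (rule sym_nat[symmetric]) (rule T | simp)+
    also have "... = lt (lid (Fo X)) (w (Uo A))" unfolding sym_unitr by (rule l_idr) (rule T | simp)+
    finally show ?thesis using l_idl[OF l_id_ty[OF refl refl]] by simp
  qed
  have b3: "lc a1 (lt (lt (lid (Fo X)) (w (Uo A))) (lid (lT ?FA A))) = big"
  proof -
    have "lt (lt (lid (Fo X)) (w (Uo A))) (lid (lT ?FA A)) = lt (lt (lt (lid (Fo X)) (w (Uo A))) (lid ?FA)) (lid A)"
      unfolding ten_id[symmetric] by (rule ten_assoc[symmetric]) (rule T | simp)+
    also have "lt (lt (lid (Fo X)) (w (Uo A))) (lid ?FA) = lt (lid (Fo X)) (lt (w (Uo A)) (lid ?FA))"
      by (rule ten_assoc) (rule T | simp)+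
    finally have "lc a1 (lt (lt (lid (Fo X)) (w (Uo A))) (lid (lT ?FA A))) = lc a1 (lt (lt (lid (Fo X)) (lt (w (Uo A)) (lid ?FA))) (lid A))"
      by simp
    also have "... = lt (lc (lt (lid (Fo X)) (cX (Uo A))) (lt (lid (Fo X)) (lt (w (Uo A)) (lid ?FA)))) (lc (lid A) (lid A))"
      unfolding a1_def by (rule interchange[symmetric]) (rule T | simp)+
    also have "lc (lt (lid (Fo X)) (cX (Uo A))) (lt (lid (Fo X)) (lt (w (Uo A)) (lid ?FA)))
       = lt (lc (lid (Fo X)) (lid (Fo X))) (lc (cX (Uo A)) (lt (w (Uo A)) (lid ?FA)))"
      by (rule interchange[symmetric]) (rule T | simp)+
    finally show ?thesis unfolding big_def counit_l using l_idl[OF l_id_ty[OF refl refl]] ten_id by simp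
  qed
  have "snd (derX S X A) = lc (lc (lt (cX X) (lid (lT ?FA A))) (lt (Fm (cid X)) (snd (SigmaX S X A A (scrD S X A)))))
          (lt (w X) (lt (w (Uo A)) (lid ?FA)))"
  proof -
    have "lt (lt (w X) (w (Uo A))) (lid ?FA) = lt (w X) (lt (w (Uo A)) (lid ?FA))" by (rule ten_assoc) (rule T | simp)+
    thus ?thesis unfolding derX_def muX_def bangL_def SigmaX_def LScmp_def by simp
  qed
  also have "... = lc (snd (SigmaX S X A A (scrD S X A))) (lt (w (Uo A)) (lid ?FA))"
    unfolding sig by (rule G1) (rule T | simp)+
  also have "... = lc (lc a1 a2) (lc (lt (lid ?FA) G) (lt (w (Uo A)) (lid ?FA)))" unfolding sig
    by (rule l_assoc) (rule T | simp)+
  also have "... = lc (lc a1 a2) (lc (lt (w (Uo A)) big) G)" unfolding b1 ..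
  also have "... = lc (lc (lc a1 a2) (lt (w (Uo A)) big)) G" by (rule l_assoc[symmetric]) (rule T | simp add: big_def)+
  also have "lc (lc a1 a2) (lt (w (Uo A)) big) = lc a1 (lc a2 (lt (w (Uo A)) big))" by (rule l_assoc) (rule T | simp add: big_def)+
  also have "... = big" unfolding b2 b3 ..
  also have "lc big G = G" unfolding big_def by (rule l_idl) (rule T | simp)+
  finally have sn: "snd (derX S X A) = lt (w X) dd" unfolding G_def .
  have fs: "fst (derX S X A) = cid X"
    unfolding derX_def muX_def SigmaX_def LScmp_def using c_idl[OF c_id_ty[OF refl refl]] by simp
  show ?thesis using sn fs unfolding dd_def by (simp add: prod_eq_iff)
qed


lemma main:
  "LScmp S (X, lTen S (bangL S A) A) (derX S X A) (digX S X A)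
       = LScmp S (X, lTen S (bangL S A) A)
           (LScmp S (X, lTen S (bangL S A) A)
              (tenX S X (bangL S A) A (contrX S X A) (LSid S (X, A)))
              (tenX S X (bangL S A) (lTen S (bangL S A) A) (digX S X A) (derX S X A)))
           (derX S X (bangL S A))"
proof -
  note T = ty
  let ?FA = "Fo (Uo A)"
  let ?dA = "TM S (eta (Uo A))"
  let ?pA = "Fm (eta (Uo A))"
  let ?cA = "cX (Uo A)"
  let ?dB = "TM S (eta (Uo ?FA))"
  have dAty: "?dA \<in> LH (lT ?FA A) ?FA" by (rule T | simp)+
  have pAty: "?pA \<in> LH ?FA (Fo (Uo ?FA))" by (rule T | simp)+
  have cAty: "?cA \<in> LH ?FA (lT ?FA ?FA)" by (rule T | simp)+
  have dBty: "?dB \<in> LH (lT (Fo (Uo ?FA)) ?FA) (Fo (Uo ?FA))" by (rule T | simp)+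
  have idty: "lid A \<in> LH A A" by (rule T | simp)+
  note T = T dAty pAty cAty dBty idty
  have e1: "derX S X A = (cid X, lt (w X) ?dA)" by (rule derX_eq)
  have e2: "digX S X A = (cid X, lt (w X) ?pA)" unfolding digX_def digL_def ..
  have e3: "contrX S X A = (cid X, lt (w X) ?cA)" unfolding contrX_def ..
  have e4: "LSid S (X, A) = (cid X, lt (w X) (lid A))" unfolding LSid_def by simp
  have e5: "derX S X (bangL S A) = (cid X, lt (w X) ?dB)" unfolding bangL_def by (rule derX_eq)
  have l: "LScmp S (X, lT ?FA A) (cid X, lt (w X) ?dA) (cid X, lt (w X) ?pA) = (cid X, lt (w X) (lc ?dA ?pA))"
    by (rule FibCmp[OF dAty pAty])
  have r1: "tenX S X ?FA A (cid X, lt (w X) ?cA) (cid X, lt (w X) (lid A)) = (cid X, lt (w X) (lt ?cA (lid A)))"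
    by (rule FibTen[OF cAty idty])
  have r2: "tenX S X ?FA (lT ?FA A) (cid X, lt (w X) ?pA) (cid X, lt (w X) ?dA) = (cid X, lt (w X) (lt ?pA ?dA))"
    by (rule FibTen[OF pAty dAty])
  have ty1: "lt ?cA (lid A) \<in> LH (lT ?FA A) (lT ?FA (lT ?FA A))" by (rule T | simp)+
  have ty2: "lt ?pA ?dA \<in> LH (lT ?FA (lT ?FA A)) (lT (Fo (Uo ?FA)) ?FA)" by (rule T | simp)+
  have r3: "LScmp S (X, lT ?FA A) (cid X, lt (w X) (lt ?cA (lid A))) (cid X, lt (w X) (lt ?pA ?dA))
     = (cid X, lt (w X) (lc (lt ?cA (lid A)) (lt ?pA ?dA)))"
    by (rule FibCmp[OF ty1 ty2])
  have ty3: "lc (lt ?cA (lid A)) (lt ?pA ?dA) \<in> LH (lT ?FA A) (lT (Fo (Uo ?FA)) ?FA)" by (rule T ty1 ty2 | simp)+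
  have r4: "LScmp S (X, lT ?FA A) (cid X, lt (w X) (lc (lt ?cA (lid A)) (lt ?pA ?dA))) (cid X, lt (w X) ?dB)
     = (cid X, lt (w X) (lc (lc (lt ?cA (lid A)) (lt ?pA ?dA)) ?dB))"
    by (rule FibCmp[OF ty3 dBty])
  show ?thesis unfolding e1 e2 e3 e4 e5 unfolding bangL_def l r1 r2 r3 r4 chainL ..
qed

end

theorem proposition4p32:
  fixes S :: "('c,'f,'l,'g) gdsc_data" and X :: 'c and A :: 'l
  assumes "GDSC S"
  shows "LScmp S (X, lTen S (bangL S A) A) (derX S X A) (digX S X A)
       = LScmp S (X, lTen S (bangL S A) A)
           (LScmp S (X, lTen S (bangL S A) A)
              (tenX S X (bangL S A) A (contrX S X A) (LSid S (X, A)))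
              (tenX S X (bangL S A) (lTen S (bangL S A) A) (digX S X A) (derX S X A)))
           (derX S X (bangL S A))"
  by (rule gd.main[OF gd.intro[OF assms]])

end
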